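(* Let $H_0,H_1$ be complex Hilbert spaces, $G$ a densely defined closed operator from $H_0$ into $H_1$ and $D$ a densely defined closed operator from $H_1$ into $H_0$ with $-G^*\subset D$. Let $m\in\mathcal L(H_0)$ (not necessarily coercive), $a\in\mathcal L(H_1)$ coercive, $H$ a Hilbert space and $\kappa\in\mathcal L(\mathrm{BD}(G),H)$ injective with dense range. Define $j=\kappa\circ\pi_{\mathrm{BD}(G)}\colon\mathrm{dom}(G)\to H$ and $\mathfrak b(u,v)=(aGu,Gv)_{H_1}+(mu,v)_{H_0}$ for $u,v\in\mathrm{dom}(G)$. Then the Dirichlet-to-Neumann graph $\Lambda_H$ in $H$ associated with $-DaG+m$ satisfies \[ \Lambda_H=\{(\varphi,\psi)\in H\times H:\exists u\in\mathrm{dom}(G)\text{ with }j(u)=\varphi\text{ and }\mathfrak b(u,v)=(\psi,j(v))_H\text{ for all }v\in\mathrm{dom}(G)\}. \]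
   Context: $\mathring D=-G^*$, $\mathring G=-D^*$. Domains carry graph inner products. $\mathrm{BD}(G)$ (resp. $\mathrm{BD}(D)$) is the orthogonal complement of $\mathrm{dom}(\mathring G)$ in $\mathrm{dom}(G)$ (resp. of $\mathrm{dom}(\mathring D)$ in $\mathrm{dom}(D)$) with induced inner products; $\pi_{\mathrm{BD}(G)},\pi_{\mathrm{BD}(D)}$ the orthogonal projections. $G$ maps $\mathrm{BD}(G)$ into $\mathrm{BD}(D)$. Coercive: $\mathrm{Re}(ax,x)\ge\mu\|x\|^2$ for some $\mu>0$. The Dirichlet-to-Neumann graph is $\Lambda=\{(\pi_{\mathrm{BD}(G)}u,\pi_{\mathrm{BD}(D)}aGu): u\in\mathrm{dom}(G),\ aGu\in\mathrm{dom}(D),\ mu-DaGu=0\}$, and $\Lambda_H=\{(\varphi,\psi)\in H\times H:\exists u_0\in\mathrm{BD}(G),\ \kappa(u_0)=\varphi,\ (u_0,G\kappa^*\psi)\in\Lambda\}$ with $\kappa^*\colon H\to\mathrm{BD}(G)$ the adjoint of $\kappa$. *)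

theory Defs
  imports "HOL-Analysis.Analysis"
begin

text \<open>Complex Hilbert spaces are given explicitly: the carrier is a whole type,
  together with a complex scalar multiplication sc and an inner product ip
  (linear in the first, conjugate-linear in the second argument).\<close>

definition inorm :: "('a \<Rightarrow> 'a \<Rightarrow> complex) \<Rightarrow> 'a \<Rightarrow> real" where
  "inorm ip x = sqrt (Re (ip x x))"

definition cHilbert :: "(complex \<Rightarrow> 'a::ab_group_add \<Rightarrow> 'a) \<Rightarrow> ('a \<Rightarrow> 'a \<Rightarrow> complex) \<Rightarrow> bool" where
  "cHilbert sc ip \<longleftrightarrow>
     Vector_Spaces.vector_space sc \<and>
     (\<forall>x y z. ip (x + y) z = ip x z + ip y z) \<and>
     (\<forall>c x y. ip (sc c x) y = c * ip x y) \<and>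
     (\<forall>x y. ip y x = cnj (ip x y)) \<and>
     (\<forall>x. x \<noteq> 0 \<longrightarrow> Re (ip x x) > 0) \<and>
     (\<forall>X::nat \<Rightarrow> 'a. (\<forall>e>0. \<exists>N. \<forall>m\<ge>N. \<forall>n\<ge>N. inorm ip (X m - X n) < e)
          \<longrightarrow> (\<exists>L. (\<lambda>n. inorm ip (X n - L)) \<longlonglongrightarrow> 0))"

definition dense_in :: "('a::ab_group_add \<Rightarrow> 'a \<Rightarrow> complex) \<Rightarrow> 'a set \<Rightarrow> bool" where
  "dense_in ip S \<longleftrightarrow> (\<forall>x. \<forall>e>0. \<exists>y\<in>S. inorm ip (x - y) < e)"

text \<open>(Unbounded) linear operators are represented by their graphs.\<close>
definition lin_op :: "(complex \<Rightarrow> 'a::ab_group_add \<Rightarrow> 'a) \<Rightarrow> (complex \<Rightarrow> 'b::ab_group_add \<Rightarrow> 'b)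
    \<Rightarrow> ('a \<times> 'b) set \<Rightarrow> bool" where
  "lin_op sc0 sc1 A \<longleftrightarrow>
     (0, 0) \<in> A \<and>
     (\<forall>x y x' y'. (x, y) \<in> A \<longrightarrow> (x', y') \<in> A \<longrightarrow> (x + x', y + y') \<in> A) \<and>
     (\<forall>c x y. (x, y) \<in> A \<longrightarrow> (sc0 c x, sc1 c y) \<in> A) \<and>
     (\<forall>y. (0, y) \<in> A \<longrightarrow> y = 0)"

definition closed_op :: "('a::ab_group_add \<Rightarrow> 'a \<Rightarrow> complex) \<Rightarrow> ('b::ab_group_add \<Rightarrow> 'b \<Rightarrow> complex)
    \<Rightarrow> ('a \<times> 'b) set \<Rightarrow> bool" where
  "closed_op ip0 ip1 A \<longleftrightarrow>
     (\<forall>X Y x y. (\<forall>n. (X n, Y n) \<in> A) \<longrightarrow> (\<lambda>n. inorm ip0 (X n - x)) \<longlonglongrightarrow> 0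
        \<longrightarrow> (\<lambda>n. inorm ip1 (Y n - y)) \<longlonglongrightarrow> 0 \<longrightarrow> (x, y) \<in> A)"

definition opap :: "('a \<times> 'b) set \<Rightarrow> 'a \<Rightarrow> 'b" where
  "opap A x = (THE y. (x, y) \<in> A)"

definition adjoint_op :: "('a \<Rightarrow> 'a \<Rightarrow> complex) \<Rightarrow> ('b \<Rightarrow> 'b \<Rightarrow> complex)
    \<Rightarrow> ('a \<times> 'b) set \<Rightarrow> ('b \<times> 'a) set" where
  "adjoint_op ip0 ip1 A = {(y, z). \<forall>(x, w)\<in>A. ip1 w y = ip0 x z}"

definition neg_op :: "('a \<times> 'b::uminus) set \<Rightarrow> ('a \<times> 'b) set" where
  "neg_op A = {(x, - y) | x y. (x, y) \<in> A}"

definition gip :: "('a \<Rightarrow> 'a \<Rightarrow> complex) \<Rightarrow> ('b \<Rightarrow> 'b \<Rightarrow> complex) \<Rightarrow> ('a \<times> 'b) set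
    \<Rightarrow> 'a \<Rightarrow> 'a \<Rightarrow> complex" where
  "gip ip0 ip1 A u v = ip0 u v + ip1 (opap A u) (opap A v)"

definition BD :: "('a \<Rightarrow> 'a \<Rightarrow> complex) \<Rightarrow> ('b \<Rightarrow> 'b \<Rightarrow> complex) \<Rightarrow> ('a \<times> 'b) set
    \<Rightarrow> ('a \<times> 'b) set \<Rightarrow> 'a set" where
  "BD ip0 ip1 A A0 = {u \<in> Domain A. \<forall>w\<in>Domain A0. gip ip0 ip1 A u w = 0}"

definition piBD :: "('a::ab_group_add \<Rightarrow> 'a \<Rightarrow> complex) \<Rightarrow> ('b \<Rightarrow> 'b \<Rightarrow> complex) \<Rightarrow> ('a \<times> 'b) set
    \<Rightarrow> ('a \<times> 'b) set \<Rightarrow> 'a \<Rightarrow> 'a" where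
  "piBD ip0 ip1 A A0 u = (THE w. w \<in> BD ip0 ip1 A A0 \<and>
      (\<forall>z\<in>BD ip0 ip1 A A0. gip ip0 ip1 A (u - w) z = 0))"

definition bounded_lin :: "(complex \<Rightarrow> 'a::ab_group_add \<Rightarrow> 'a) \<Rightarrow> ('a \<Rightarrow> 'a \<Rightarrow> complex)
    \<Rightarrow> (complex \<Rightarrow> 'b::ab_group_add \<Rightarrow> 'b) \<Rightarrow> ('b \<Rightarrow> 'b \<Rightarrow> complex) \<Rightarrow> ('a \<Rightarrow> 'b) \<Rightarrow> bool" where
  "bounded_lin sc0 ip0 sc1 ip1 f \<longleftrightarrow>
     (\<forall>x y. f (x + y) = f x + f y) \<and> (\<forall>c x. f (sc0 c x) = sc1 c (f x)) \<and>
     (\<exists>C. \<forall>x. inorm ip1 (f x) \<le> C * inorm ip0 x)"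

definition coercive :: "('b \<Rightarrow> 'b \<Rightarrow> complex) \<Rightarrow> ('b \<Rightarrow> 'b) \<Rightarrow> bool" where
  "coercive ip a \<longleftrightarrow> (\<exists>\<mu>>0. \<forall>x. Re (ip (a x) x) \<ge> \<mu> * (inorm ip x)\<^sup>2)"

definition kappa_adj :: "('a \<Rightarrow> 'a \<Rightarrow> complex) \<Rightarrow> ('b \<Rightarrow> 'b \<Rightarrow> complex) \<Rightarrow> ('a \<times> 'b) set
    \<Rightarrow> ('a \<times> 'b) set \<Rightarrow> ('c \<Rightarrow> 'c \<Rightarrow> complex) \<Rightarrow> ('a \<Rightarrow> 'c) \<Rightarrow> 'c \<Rightarrow> 'a" where
  "kappa_adj ip0 ip1 G G0 ipH \<kappa> \<psi> = (THE w. w \<in> BD ip0 ip1 G G0 \<and>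
      (\<forall>u\<in>BD ip0 ip1 G G0. ipH (\<kappa> u) \<psi> = gip ip0 ip1 G u w))"

text \<open>Dirichlet-to-Neumann graph Lambda in BD(G) x BD(D) for -DaG+m.
  Here G0 = dom of the "ring" operator -D^*, D0 = -G^*.\<close>
definition DtN :: "('a::ab_group_add \<Rightarrow> 'a \<Rightarrow> complex) \<Rightarrow> ('b::ab_group_add \<Rightarrow> 'b \<Rightarrow> complex)
    \<Rightarrow> ('a \<times> 'b) set \<Rightarrow> ('b \<times> 'a) set \<Rightarrow> ('a \<Rightarrow> 'a) \<Rightarrow> ('b \<Rightarrow> 'b) \<Rightarrow> ('a \<times> 'b) set" where
  "DtN ip0 ip1 G D m a =
     {(piBD ip0 ip1 G (neg_op (adjoint_op ip1 ip0 D)) u,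
       piBD ip1 ip0 D (neg_op (adjoint_op ip0 ip1 G)) (a (opap G u))) | u.
        u \<in> Domain G \<and> a (opap G u) \<in> Domain D \<and> m u - opap D (a (opap G u)) = 0}"

definition DtN_H :: "('a::ab_group_add \<Rightarrow> 'a \<Rightarrow> complex) \<Rightarrow> ('b::ab_group_add \<Rightarrow> 'b \<Rightarrow> complex)
    \<Rightarrow> ('a \<times> 'b) set \<Rightarrow> ('b \<times> 'a) set \<Rightarrow> ('a \<Rightarrow> 'a) \<Rightarrow> ('b \<Rightarrow> 'b)
    \<Rightarrow> ('c \<Rightarrow> 'c \<Rightarrow> complex) \<Rightarrow> ('a \<Rightarrow> 'c) \<Rightarrow> ('c \<times> 'c) set" where
  "DtN_H ip0 ip1 G D m a ipH \<kappa> =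
     {(\<phi>, \<psi>). \<exists>u0\<in>BD ip0 ip1 G (neg_op (adjoint_op ip1 ip0 D)).
        \<kappa> u0 = \<phi> \<and>
        (u0, opap G (kappa_adj ip0 ip1 G (neg_op (adjoint_op ip1 ip0 D)) ipH \<kappa> \<psi>))
          \<in> DtN ip0 ip1 G D m a}"

end

theory Submission imports Defs begin

locale sform = Vector_Spaces.vector_space sc
  for sc :: "complex \<Rightarrow> 'a::ab_group_add \<Rightarrow> 'a" +
  fixes V :: "'a set" and ip :: "'a \<Rightarrow> 'a \<Rightarrow> complex"
  assumes V0: "0 \<in> V" and Vadd: "x \<in> V \<Longrightarrow> y \<in> V \<Longrightarrow> x + y \<in> V"
    and Vsc: "x \<in> V \<Longrightarrow> sc c x \<in> V"
    and ip_add: "x \<in> V \<Longrightarrow> y \<in> V \<Longrightarrow> z \<in> V \<Longrightarrow> ip (x + y) z = ip x z + ip y z"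
    and ip_sc: "x \<in> V \<Longrightarrow> y \<in> V \<Longrightarrow> ip (sc c x) y = c * ip x y"
    and ip_sym: "x \<in> V \<Longrightarrow> y \<in> V \<Longrightarrow> ip y x = cnj (ip x y)"
    and ip_pos: "x \<in> V \<Longrightarrow> x \<noteq> 0 \<Longrightarrow> Re (ip x x) > 0"
begin

abbreviation nrm where "nrm x \<equiv> inorm ip x"

lemma Vneg: "x \<in> V \<Longrightarrow> - x \<in> V"
  using Vsc[of x "-1"] by simp

lemma Vdiff: "x \<in> V \<Longrightarrow> y \<in> V \<Longrightarrow> x - y \<in> V"
  using Vadd Vneg by (metis diff_conv_add_uminus)

lemma ip_zero_l: assumes "y \<in> V" shows "ip 0 y = 0"
proof -
  have "ip (sc 0 0) y = 0 * ip 0 y" using ip_sc V0 assms by blast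
  moreover have "sc 0 0 = 0" by (rule scale_zero_left)
  ultimately show ?thesis by (metis mult_zero_left)
qed

lemma ip_zero_r: "y \<in> V \<Longrightarrow> ip y 0 = 0"
  using ip_sym[of 0 y] ip_zero_l V0 by simp

lemma ip_neg_l: "x \<in> V \<Longrightarrow> y \<in> V \<Longrightarrow> ip (- x) y = - ip x y"
  using ip_sc[of x y "-1"] by simp

lemma ip_diff_l: "x \<in> V \<Longrightarrow> y \<in> V \<Longrightarrow> z \<in> V \<Longrightarrow> ip (x - y) z = ip x z - ip y z"
  using ip_add[of x "-y" z] ip_neg_l[of y z] Vneg[of y] by (simp only: diff_conv_add_uminus)

lemma ip_add_r: "x \<in> V \<Longrightarrow> y \<in> V \<Longrightarrow> z \<in> V \<Longrightarrow> ip z (x + y) = ip z x + ip z y"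
proof -
  assume a: "x \<in> V" "y \<in> V" "z \<in> V"
  have "ip z (x + y) = cnj (ip (x + y) z)" using ip_sym a Vadd by blast
  also have "\<dots> = cnj (ip x z) + cnj (ip y z)" using ip_add a by simp
  also have "\<dots> = ip z x + ip z y" using ip_sym[of x z] ip_sym[of y z] a by simp
  finally show ?thesis .
qed

lemma ip_sc_r: "x \<in> V \<Longrightarrow> y \<in> V \<Longrightarrow> ip y (sc c x) = cnj c * ip y x"
proof -
  assume a: "x \<in> V" "y \<in> V"
  have "ip y (sc c x) = cnj (ip (sc c x) y)" using ip_sym a Vsc by blast
  also have "\<dots> = cnj c * cnj (ip x y)" using ip_sc a by simp
  also have "\<dots> = cnj c * ip y x" using ip_sym[of x y] a by simp
  finally show ?thesis .
qed

lemma ip_neg_r: "x \<in> V \<Longrightarrow> y \<in> V \<Longrightarrow> ip y (- x) = - ip y x"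
  using ip_sc_r[of x y "-1"] by simp

lemma ip_diff_r: "x \<in> V \<Longrightarrow> y \<in> V \<Longrightarrow> z \<in> V \<Longrightarrow> ip z (x - y) = ip z x - ip z y"
  using ip_add_r[of x "-y" z] ip_neg_r[of y z] Vneg by simp

lemma ip_self_real: "x \<in> V \<Longrightarrow> ip x x = complex_of_real (Re (ip x x))"
proof -
  assume x: "x \<in> V"
  have "Im (ip x x) = Im (cnj (ip x x))" using ip_sym[OF x x] by simp
  hence "Im (ip x x) = 0" by simp
  thus ?thesis by (simp add: complex_eq_iff)
qed

lemma ip_self_nonneg: "x \<in> V \<Longrightarrow> Re (ip x x) \<ge> 0"
  using ip_pos[of x] ip_zero_l V0 by (cases "x = 0") force+

lemma nrm_sq: assumes "x \<in> V" shows "(nrm x)\<^sup>2 = Re (ip x x)"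
  unfolding inorm_def using ip_self_nonneg[OF assms] by simp

lemma nrm_nonneg: assumes "x \<in> V" shows "nrm x \<ge> 0"
  unfolding inorm_def using ip_self_nonneg[OF assms] by simp

lemma nrm_0: "nrm 0 = 0"
  unfolding inorm_def using ip_zero_l[OF V0] by simp

lemma nrm_zero_iff: "x \<in> V \<Longrightarrow> nrm x = 0 \<longleftrightarrow> x = 0"
  unfolding inorm_def using ip_pos[of x] ip_zero_l V0 by (cases "x = 0") auto

lemma expand: assumes "e \<in> V" "s \<in> V"
  shows "ip (e - sc t s) (e - sc t s) = ip e e - cnj t * ip e s - t * cnj (ip e s) + t * cnj t * ip s s"
proof -
  have ts: "sc t s \<in> V" using Vsc assms by blast
  have "ip (e - sc t s) (e - sc t s) = ip e (e - sc t s) - ip (sc t s) (e - sc t s)"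
    using ip_diff_l assms ts Vdiff by blast
  also have "\<dots> = (ip e e - ip e (sc t s)) - (ip (sc t s) e - ip (sc t s) (sc t s))"
    using ip_diff_r assms ts by simp
  also have "\<dots> = (ip e e - cnj t * ip e s) - (t * ip s e - t * (cnj t * ip s s))"
    using ip_sc ip_sc_r assms ts by simp
  also have "ip s e = cnj (ip e s)" using ip_sym assms by blast
  finally show ?thesis by (simp add: algebra_simps)
qed

lemma expand_opt: assumes "e \<in> V" "s \<in> V" "s \<noteq> 0"
  shows "Re (ip (e - sc (ip e s / ip s s) s) (e - sc (ip e s / ip s s) s))
     = Re (ip e e) - (cmod (ip e s))\<^sup>2 / Re (ip s s)"
proof -
  define r where "r = Re (ip s s)"
  have r0: "r > 0" using ip_pos assms r_def by blast
  have ss: "ip s s = complex_of_real r" using ip_self_real assms r_def by blast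
  define z where "z = ip e s"
  have zz: "z * cnj z = complex_of_real ((cmod z)\<^sup>2)" by (metis complex_norm_square)
  have "ip (e - sc (z / ip s s) s) (e - sc (z / ip s s) s)
     = ip e e - cnj (z / r) * z - (z / r) * cnj z + (z / r) * cnj (z / r) * r"
    using expand[OF assms(1,2), of "z / ip s s"] ss z_def by simp
  also have "\<dots> = ip e e - (z * cnj z) / r"
    using r0 by (simp add: field_simps)
  finally show ?thesis using zz z_def r_def by simp
qed

lemma cauchy_schwarz: assumes "x \<in> V" "y \<in> V"
  shows "cmod (ip x y) \<le> nrm x * nrm y"
proof (cases "y = 0")
  case True thus ?thesis using ip_zero_r assms nrm_0 by simp
next
  case False
  have r0: "Re (ip y y) > 0" using ip_pos assms False by blast
  have "0 \<le> Re (ip (x - sc (ip x y / ip y y) y) (x - sc (ip x y / ip y y) y))"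
    using ip_self_nonneg Vdiff Vsc assms by blast
  hence "(cmod (ip x y))\<^sup>2 / Re (ip y y) \<le> Re (ip x x)"
    using expand_opt[OF assms False] by simp
  hence "(cmod (ip x y))\<^sup>2 \<le> Re (ip x x) * Re (ip y y)"
    using r0 by (simp add: divide_le_eq)
  also have "\<dots> = (nrm x * nrm y)\<^sup>2" using nrm_sq assms by (simp add: power_mult_distrib)
  finally show ?thesis using nrm_nonneg[OF assms(1)] nrm_nonneg[OF assms(2)]
    by (meson mult_nonneg_nonneg power2_le_imp_le)
qed

lemma nrm_add_sq: assumes "x \<in> V" "y \<in> V"
  shows "(nrm (x + y))\<^sup>2 = (nrm x)\<^sup>2 + 2 * Re (ip x y) + (nrm y)\<^sup>2"
proof -
  have "ip (x + y) (x + y) = ip x x + ip x y + (ip y x + ip y y)"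
    using ip_add ip_add_r assms Vadd by simp
  moreover have "Re (ip y x) = Re (ip x y)" using ip_sym[of x y] assms by simp
  ultimately show ?thesis using nrm_sq assms Vadd by simp
qed

lemma nrm_triangle: assumes "x \<in> V" "y \<in> V"
  shows "nrm (x + y) \<le> nrm x + nrm y"
proof -
  have "Re (ip x y) \<le> nrm x * nrm y"
    using cauchy_schwarz[OF assms] complex_Re_le_cmod order_trans by blast
  hence "(nrm (x + y))\<^sup>2 \<le> (nrm x + nrm y)\<^sup>2"
    using nrm_add_sq[OF assms] by (simp add: power2_sum)
  thus ?thesis using nrm_nonneg assms by (meson add_nonneg_nonneg power2_le_imp_le)
qed

lemma nrm_sc: "x \<in> V \<Longrightarrow> nrm (sc c x) = cmod c * nrm x"
proof -
  assume x: "x \<in> V"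
  have "ip (sc c x) (sc c x) = c * (cnj c * ip x x)" using ip_sc ip_sc_r x Vsc by simp
  also have "\<dots> = complex_of_real ((cmod c)\<^sup>2) * ip x x"
    by (metis mult.assoc complex_norm_square)
  finally have "Re (ip (sc c x) (sc c x)) = (cmod c)\<^sup>2 * Re (ip x x)" by simp
  thus ?thesis unfolding inorm_def by (simp add: real_sqrt_mult)
qed

lemma nrm_neg: "x \<in> V \<Longrightarrow> nrm (- x) = nrm x"
  using nrm_sc[of x "-1"] by simp

lemma nrm_commute: "x \<in> V \<Longrightarrow> y \<in> V \<Longrightarrow> nrm (x - y) = nrm (y - x)"
  using nrm_neg[of "y - x"] Vdiff by simp

lemma parallelogram: assumes "x \<in> V" "y \<in> V"
  shows "(nrm (x + y))\<^sup>2 + (nrm (x - y))\<^sup>2 = 2 * (nrm x)\<^sup>2 + 2 * (nrm y)\<^sup>2"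
proof -
  have "(nrm (x - y))\<^sup>2 = (nrm x)\<^sup>2 + 2 * Re (ip x (-y)) + (nrm (-y))\<^sup>2"
    using nrm_add_sq[of x "-y"] assms Vneg by simp
  thus ?thesis using nrm_add_sq[OF assms] nrm_neg ip_neg_r assms by simp
qed


lemma ip_cont_r:
  assumes "q \<in> V" "x \<in> V" "\<And>n. X n \<in> V" "(\<lambda>n. nrm (X n - x)) \<longlonglongrightarrow> 0"
  shows "(\<lambda>n. ip q (X n)) \<longlonglongrightarrow> ip q x"
proof -
  have "(\<lambda>n. norm (ip q (X n) - ip q x)) \<longlonglongrightarrow> 0"
  proof (rule tendsto_sandwich[where f="\<lambda>n. 0" and h="\<lambda>n. nrm q * nrm (X n - x)"])
    show "\<forall>\<^sub>F n in sequentially. 0 \<le> norm (ip q (X n) - ip q x)" by simp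
    show "\<forall>\<^sub>F n in sequentially. norm (ip q (X n) - ip q x) \<le> nrm q * nrm (X n - x)"
    proof (intro always_eventually allI)
      fix n
      show "norm (ip q (X n) - ip q x) \<le> nrm q * nrm (X n - x)"
        using cauchy_schwarz[of q "X n - x"] ip_diff_r[of "X n" x q] assms(1,2) assms(3)[of n] Vdiff by simp
    qed
    have "(\<lambda>n. nrm q * nrm (X n - x)) \<longlonglongrightarrow> nrm q * 0" by (intro tendsto_intros assms(4))
    thus "(\<lambda>n. nrm q * nrm (X n - x)) \<longlonglongrightarrow> 0" by simp
  qed simp
  thus ?thesis by (simp add: tendsto_norm_zero_iff LIM_zero_iff)
qed

lemma sc2: "sc 2 x = x + x"
  using scale_left_distrib[of 1 1 x] by (simp add: one_add_one)

lemma proj: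
  assumes SV: "S \<subseteq> V" and S0: "0 \<in> S" and Sadd: "\<And>x y. x \<in> S \<Longrightarrow> y \<in> S \<Longrightarrow> x + y \<in> S"
    and Ssc: "\<And>c x. x \<in> S \<Longrightarrow> sc c x \<in> S"
    and Scomp: "\<And>X. (\<forall>n. X n \<in> S) \<Longrightarrow> (\<forall>e>0. \<exists>N. \<forall>m\<ge>N. \<forall>n\<ge>N. nrm (X m - X n) < e)
        \<Longrightarrow> \<exists>L\<in>S. (\<lambda>n. nrm (X n - L)) \<longlonglongrightarrow> 0"
    and x: "x \<in> V"
  shows "\<exists>p\<in>S. \<forall>s\<in>S. ip (x - p) s = 0"
proof -
  have sV: "\<And>s. s \<in> S \<Longrightarrow> s \<in> V" using SV by blast
  have Sneg: "\<And>s. s \<in> S \<Longrightarrow> - s \<in> S" using Ssc[of _ "-1"] by simp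
  have Sdiff: "\<And>a b. a \<in> S \<Longrightarrow> b \<in> S \<Longrightarrow> a - b \<in> S"
    using Sadd Sneg by (metis diff_conv_add_uminus)
  define F where "F = (\<lambda>s. nrm (x - s)) ` S"
  have Fne: "F \<noteq> {}" using S0 F_def by blast
  have F0: "\<And>y. y \<in> F \<Longrightarrow> 0 \<le> y" unfolding F_def using nrm_nonneg Vdiff x sV by blast
  have Fbdd: "bdd_below F" using F0 by (intro bdd_belowI[of _ 0]) auto
  define d where "d = Inf F"
  have dle: "\<And>s. s \<in> S \<Longrightarrow> d \<le> nrm (x - s)"
  proof -
    fix s assume "s \<in> S"
    hence "nrm (x - s) \<in> F" unfolding F_def by blast
    thus "d \<le> nrm (x - s)" unfolding d_def using cInf_lower Fbdd by blast
  qed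
  have d0: "0 \<le> d" unfolding d_def using cInf_greatest[OF Fne] F0 by blast
  have ex: "\<exists>s\<in>S. nrm (x - s) < sqrt (d\<^sup>2 + inverse (real (Suc n)))" for n
  proof -
    have "sqrt (d\<^sup>2) < sqrt (d\<^sup>2 + inverse (real (Suc n)))" by (rule real_sqrt_less_mono) simp
    hence "Inf F < sqrt (d\<^sup>2 + inverse (real (Suc n)))" using d0 d_def by simp
    then obtain y where "y \<in> F" "y < sqrt (d\<^sup>2 + inverse (real (Suc n)))"
      using cInf_lessD[OF Fne] by blast
    thus ?thesis unfolding F_def by blast
  qed
  then obtain s where s: "\<And>n. s n \<in> S" "\<And>n. nrm (x - s n) < sqrt (d\<^sup>2 + inverse (real (Suc n)))"
    by metis
  have sq: "(nrm (x - s n))\<^sup>2 < d\<^sup>2 + inverse (real (Suc n))" for n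
  proof -
    have a: "0 \<le> nrm (x - s n)" using nrm_nonneg Vdiff x sV s(1) by blast
    have "(nrm (x - s n))\<^sup>2 < (sqrt (d\<^sup>2 + inverse (real (Suc n))))\<^sup>2"
      by (rule power_strict_mono[OF s(2) a]) simp
    thus ?thesis by simp
  qed
  have mid: "(nrm (s m - s n))\<^sup>2 \<le> 2 * inverse (real (Suc n)) + 2 * inverse (real (Suc m))" for m n
  proof -
    define w where "w = sc (1/2) (s n + s m)"
    have wS: "w \<in> S" unfolding w_def using Ssc Sadd s(1) by blast
    have aV: "x - s n \<in> V" and bV: "x - s m \<in> V" using Vdiff x sV s(1) by blast+
    have ab: "(x - s n) + (x - s m) = sc 2 (x - w)"
      unfolding w_def by (simp add: scale_right_diff_distrib sc2 algebra_simps)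
    have ba: "(x - s n) - (x - s m) = s m - s n" by (simp add: algebra_simps)
    have "nrm ((x - s n) + (x - s m)) = 2 * nrm (x - w)"
      unfolding ab using nrm_sc[of "x - w" 2] Vdiff x sV wS by simp
    moreover have "d \<le> nrm (x - w)" using dle wS by blast
    ultimately have "2 * d \<le> nrm ((x - s n) + (x - s m))" by simp
    hence "(2 * d)\<^sup>2 \<le> (nrm ((x - s n) + (x - s m)))\<^sup>2"
      using d0 by (intro power_mono) auto
    hence "4 * d\<^sup>2 \<le> (nrm ((x - s n) + (x - s m)))\<^sup>2" by (simp add: power_mult_distrib)
    moreover have "(nrm ((x - s n) + (x - s m)))\<^sup>2 + (nrm (s m - s n))\<^sup>2
        = 2 * (nrm (x - s n))\<^sup>2 + 2 * (nrm (x - s m))\<^sup>2"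
      using parallelogram[OF aV bV] ba by simp
    ultimately show ?thesis using sq[of n] sq[of m] by linarith
  qed
  have cauchy: "\<forall>e>0. \<exists>N. \<forall>m\<ge>N. \<forall>n\<ge>N. nrm (s m - s n) < e"
  proof (intro allI impI)
    fix e :: real assume e: "e > 0"
    obtain N :: nat where N: "4 / e\<^sup>2 < real N" using reals_Archimedean2 by blast
    have small: "inverse (real (Suc k)) < e\<^sup>2 / 4" if "k \<ge> N" for k
    proof -
      have "4 / e\<^sup>2 < real (Suc k)" using N that by simp
      moreover have "0 < 4 / e\<^sup>2" using e by simp
      ultimately have "inverse (real (Suc k)) < inverse (4 / e\<^sup>2)"
        by (rule less_imp_inverse_less)
      thus ?thesis by simp
    qed
    show "\<exists>N. \<forall>m\<ge>N. \<forall>n\<ge>N. nrm (s m - s n) < e"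
    proof (intro exI allI impI)
      fix m n assume "m \<ge> N" "n \<ge> N"
      hence "(nrm (s m - s n))\<^sup>2 < e\<^sup>2" using mid[of m n] small[of m] small[of n] by linarith
      thus "nrm (s m - s n) < e" by (rule power_less_imp_less_base) (use e in linarith)
    qed
  qed
  obtain p where p: "p \<in> S" "(\<lambda>n. nrm (s n - p)) \<longlonglongrightarrow> 0" using Scomp[of s] s(1) cauchy by blast
  have pV: "p \<in> V" using sV p(1) by blast
  have "nrm (x - p) \<le> d"
  proof -
    have lim: "(\<lambda>n. sqrt (d\<^sup>2 + inverse (real (Suc n))) + nrm (s n - p)) \<longlonglongrightarrow> sqrt (d\<^sup>2 + 0) + 0"
      by (intro tendsto_intros LIMSEQ_inverse_real_of_nat p(2))
    have "nrm (x - p) \<le> sqrt (d\<^sup>2 + inverse (real (Suc n))) + nrm (s n - p)" for n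
    proof -
      have "x - p = (x - s n) + (s n - p)" by simp
      hence "nrm (x - p) \<le> nrm (x - s n) + nrm (s n - p)"
        using nrm_triangle[of "x - s n" "s n - p"] Vdiff x sV s(1) pV by simp
      thus ?thesis using s(2)[of n] by linarith
    qed
    hence "nrm (x - p) \<le> sqrt (d\<^sup>2 + 0) + 0" using LIMSEQ_le_const[OF lim] by blast
    thus ?thesis using d0 by simp
  qed
  hence opt: "\<And>s'. s' \<in> S \<Longrightarrow> nrm (x - p) \<le> nrm (x - s')" using dle by (meson order_trans)
  show ?thesis
  proof (intro bexI[OF _ p(1)] ballI)
    fix t assume t: "t \<in> S"
    define e where "e = x - p"
    have eV: "e \<in> V" unfolding e_def using Vdiff x pV by blast
    have tV: "t \<in> V" using sV t by blast
    show "ip (x - p) t = 0"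
    proof (cases "t = 0")
      case True thus ?thesis using ip_zero_r Vdiff x pV by simp
    next
      case False
      define c where "c = ip e t / ip t t"
      have "p + sc c t \<in> S" using Sadd Ssc p(1) t by blast
      moreover have "x - (p + sc c t) = e - sc c t" unfolding e_def by (simp add: algebra_simps)
      ultimately have "nrm e \<le> nrm (e - sc c t)" using opt e_def by metis
      hence "(nrm e)\<^sup>2 \<le> (nrm (e - sc c t))\<^sup>2" using nrm_nonneg eV by (intro power_mono) auto
      hence "Re (ip e e) \<le> Re (ip e e) - (cmod (ip e t))\<^sup>2 / Re (ip t t)"
        using nrm_sq eV Vdiff Vsc tV expand_opt[OF eV tV False] c_def by simp
      moreover have "Re (ip t t) > 0" using ip_pos tV False by blast
      ultimately have "(cmod (ip e t))\<^sup>2 \<le> 0"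
        by (simp add: divide_le_0_iff)
      hence "cmod (ip e t) = 0" by simp
      thus ?thesis unfolding e_def by simp
    qed
  qed
qed

end

lemma squeeze0: fixes f g :: "nat \<Rightarrow> real"
  assumes "\<And>n. 0 \<le> f n" "\<And>n. f n \<le> g n" "g \<longlonglongrightarrow> 0" shows "f \<longlonglongrightarrow> 0"
  by (rule tendsto_sandwich[where f="\<lambda>n. 0" and g=f and h=g]) (use assms in auto)

lemma le_lim0: fixes f :: "nat \<Rightarrow> real"
  assumes "\<And>n. a \<le> c * f n" "f \<longlonglongrightarrow> 0" shows "a \<le> 0"
proof -
  have "(\<lambda>n. c * f n) \<longlonglongrightarrow> c * 0" by (intro tendsto_intros assms(2))
  thus ?thesis using LIMSEQ_le_const assms(1) by fastforce
qed

lemma cH_sform: assumes "cHilbert sc ip" shows "sform sc UNIV ip"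
proof (intro sform.intro sform_axioms.intro)
  note h = assms[unfolded cHilbert_def]
  show "Vector_Spaces.vector_space sc" using h by (elim conjE)
  fix x y z c
  show "ip (x + y) z = ip x z + ip y z" using h by (elim conjE) blast
  show "ip (sc c x) y = c * ip x y" using h by (elim conjE) blast
  show "ip y x = cnj (ip x y)" using h by (elim conjE) blast
  show "x \<noteq> 0 \<Longrightarrow> Re (ip x x) > 0" using h by (elim conjE) blast
qed auto

definition pscl :: "(complex \<Rightarrow> 'a \<Rightarrow> 'a) \<Rightarrow> (complex \<Rightarrow> 'b \<Rightarrow> 'b) \<Rightarrow> complex \<Rightarrow> 'a \<times> 'b \<Rightarrow> 'a \<times> 'b"
  where "pscl s0 s1 c p = (s0 c (fst p), s1 c (snd p))"
definition pip :: "('a \<Rightarrow> 'a \<Rightarrow> complex) \<Rightarrow> ('b \<Rightarrow> 'b \<Rightarrow> complex) \<Rightarrow> 'a \<times> 'b \<Rightarrow> 'a \<times> 'b \<Rightarrow> complex"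
  where "pip i0 i1 p q = i0 (fst p) (fst q) + i1 (snd p) (snd q)"

locale twoH =
  fixes sc0 :: "complex \<Rightarrow> 'a::ab_group_add \<Rightarrow> 'a" and ip0 :: "'a \<Rightarrow> 'a \<Rightarrow> complex"
    and sc1 :: "complex \<Rightarrow> 'b::ab_group_add \<Rightarrow> 'b" and ip1 :: "'b \<Rightarrow> 'b \<Rightarrow> complex"
  assumes H0: "cHilbert sc0 ip0" and H1: "cHilbert sc1 ip1"
begin

sublocale h0: sform sc0 UNIV ip0 by (rule cH_sform[OF H0])
sublocale h1: sform sc1 UNIV ip1 by (rule cH_sform[OF H1])

lemma swap: "twoH sc1 ip1 sc0 ip0" by (rule twoH.intro[OF H1 H0])

lemma comp0: "(\<forall>e>0. \<exists>N. \<forall>m\<ge>N. \<forall>n\<ge>N. inorm ip0 (X m - X n) < e) \<Longrightarrow> \<exists>L. (\<lambda>n. inorm ip0 (X n - L)) \<longlonglongrightarrow> 0"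
  using H0 unfolding cHilbert_def by blast
lemma comp1: "(\<forall>e>0. \<exists>N. \<forall>m\<ge>N. \<forall>n\<ge>N. inorm ip1 (Y m - Y n) < e) \<Longrightarrow> \<exists>L. (\<lambda>n. inorm ip1 (Y n - L)) \<longlonglongrightarrow> 0"
  using H1 unfolding cHilbert_def by blast

lemma prod_sform: "sform (pscl sc0 sc1) UNIV (pip ip0 ip1)"
proof -
  have vs: "Vector_Spaces.vector_space (pscl sc0 sc1)"
    by unfold_locales (simp_all add: pscl_def h0.scale_right_distrib h1.scale_right_distrib
        h0.scale_left_distrib h1.scale_left_distrib)
  show ?thesis
  proof (intro sform.intro[OF vs] sform_axioms.intro)
    fix x y z :: "'a \<times> 'b" and c
    show "pip ip0 ip1 (x + y) z = pip ip0 ip1 x z + pip ip0 ip1 y z"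
      unfolding pip_def using h0.ip_add h1.ip_add by simp
    show "pip ip0 ip1 (pscl sc0 sc1 c x) y = c * pip ip0 ip1 x y"
      unfolding pip_def pscl_def using h0.ip_sc h1.ip_sc by (simp add: distrib_left)
    show "pip ip0 ip1 y x = cnj (pip ip0 ip1 x y)"
      unfolding pip_def using h0.ip_sym[of "fst x" "fst y"] h1.ip_sym[of "snd x" "snd y"] by simp
    show "x \<noteq> 0 \<Longrightarrow> 0 < Re (pip ip0 ip1 x x)"
    proof -
      assume "x \<noteq> 0"
      hence "fst x \<noteq> 0 \<or> snd x \<noteq> 0" by (simp add: prod_eq_iff)
      thus ?thesis unfolding pip_def using h0.ip_pos h1.ip_pos h0.ip_self_nonneg h1.ip_self_nonneg
        by (smt (verit) UNIV_I plus_complex.sel(1))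
    qed
  qed auto
qed

sublocale hp: sform "pscl sc0 sc1" UNIV "pip ip0 ip1" by (rule prod_sform)

lemma pnorm: "inorm (pip ip0 ip1) p = sqrt ((inorm ip0 (fst p))\<^sup>2 + (inorm ip1 (snd p))\<^sup>2)"
  using h0.nrm_sq h1.nrm_sq unfolding inorm_def pip_def by simp

lemma pnorm_ge0: "inorm ip0 (fst p) \<le> inorm (pip ip0 ip1) p"
  unfolding pnorm using h0.nrm_nonneg by (simp add: real_le_rsqrt)
lemma pnorm_ge1: "inorm ip1 (snd p) \<le> inorm (pip ip0 ip1) p"
  unfolding pnorm using h1.nrm_nonneg by (simp add: real_le_rsqrt)
lemma pnorm_le: "inorm (pip ip0 ip1) p \<le> inorm ip0 (fst p) + inorm ip1 (snd p)"
  unfolding pnorm using h0.nrm_nonneg h1.nrm_nonneg by (simp add: sqrt_sum_squares_le_sum)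

lemma lin_neg: "lin_op sc0 sc1 A \<Longrightarrow> (x, y) \<in> A \<Longrightarrow> (- x, - y) \<in> A"
  unfolding lin_op_def by (metis h0.scale_minus_left h1.scale_minus_left h0.scale_one h1.scale_one)

lemma lin_add: "lin_op sc0 sc1 A \<Longrightarrow> (x, y) \<in> A \<Longrightarrow> (x', y') \<in> A \<Longrightarrow> (x + x', y + y') \<in> A"
  unfolding lin_op_def by blast

lemma lin_sc: "lin_op sc0 sc1 A \<Longrightarrow> (x, y) \<in> A \<Longrightarrow> (sc0 c x, sc1 c y) \<in> A"
  unfolding lin_op_def by blast

lemma lin_0: "lin_op sc0 sc1 A \<Longrightarrow> (0, 0) \<in> A"
  unfolding lin_op_def by blast

lemma lin_sv: assumes "lin_op sc0 sc1 A" "(x, y) \<in> A" "(x, y') \<in> A" shows "y = y'"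
proof -
  have "(x + - x, y + - y') \<in> A" using lin_add[OF assms(1,2) lin_neg[OF assms(1,3)]] .
  hence "(0, y - y') \<in> A" by simp
  hence "y - y' = 0" using assms(1) unfolding lin_op_def by blast
  thus ?thesis by simp
qed

lemma opap_eq: "lin_op sc0 sc1 A \<Longrightarrow> (x, y) \<in> A \<Longrightarrow> opap A x = y"
  unfolding opap_def using lin_sv by blast

lemma opap_in: "lin_op sc0 sc1 A \<Longrightarrow> x \<in> Domain A \<Longrightarrow> (x, opap A x) \<in> A"
  using opap_eq by (metis DomainE)

lemma opap_add: assumes "lin_op sc0 sc1 A" "x \<in> Domain A" "y \<in> Domain A"
  shows "opap A (x + y) = opap A x + opap A y"
  using opap_eq[OF assms(1) lin_add[OF assms(1) opap_in[OF assms(1,2)] opap_in[OF assms(1,3)]]] .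

lemma opap_sc: assumes "lin_op sc0 sc1 A" "x \<in> Domain A"
  shows "opap A (sc0 c x) = sc1 c (opap A x)"
  using opap_eq[OF assms(1) lin_sc[OF assms(1) opap_in[OF assms]]] .

lemma opap_neg: assumes "lin_op sc0 sc1 A" "x \<in> Domain A"
  shows "opap A (- x) = - opap A x"
  using opap_eq[OF assms(1) lin_neg[OF assms(1) opap_in[OF assms]]] .

lemma opap_diff: assumes "lin_op sc0 sc1 A" "x \<in> Domain A" "y \<in> Domain A"
  shows "opap A (x - y) = opap A x - opap A y"
proof -
  have "- y \<in> Domain A" using lin_neg[OF assms(1) opap_in[OF assms(1,3)]] by blast
  thus ?thesis using opap_add[OF assms(1,2), of "- y"] opap_neg[OF assms(1,3)] by simp
qed

lemma opap_0: "lin_op sc0 sc1 A \<Longrightarrow> opap A 0 = 0"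
  using opap_eq lin_0 by blast

lemma dom_add: "lin_op sc0 sc1 A \<Longrightarrow> x \<in> Domain A \<Longrightarrow> y \<in> Domain A \<Longrightarrow> x + y \<in> Domain A"
  using lin_add by blast
lemma dom_sc: "lin_op sc0 sc1 A \<Longrightarrow> x \<in> Domain A \<Longrightarrow> sc0 c x \<in> Domain A"
  using lin_sc by blast
lemma dom_0: "lin_op sc0 sc1 A \<Longrightarrow> 0 \<in> Domain A"
  using lin_0 by blast

lemma graph_sform: assumes A: "lin_op sc0 sc1 A" shows "sform sc0 (Domain A) (gip ip0 ip1 A)"
proof (intro sform.intro sform_axioms.intro)
  show "Vector_Spaces.vector_space sc0" by (rule h0.vector_space_axioms)
  fix x y z c
  show "0 \<in> Domain A" using dom_0[OF A] .
  show "x \<in> Domain A \<Longrightarrow> y \<in> Domain A \<Longrightarrow> x + y \<in> Domain A" using dom_add[OF A] .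
  show "x \<in> Domain A \<Longrightarrow> sc0 c x \<in> Domain A" using dom_sc[OF A] .
  show "x \<in> Domain A \<Longrightarrow> y \<in> Domain A \<Longrightarrow> z \<in> Domain A \<Longrightarrow>
      gip ip0 ip1 A (x + y) z = gip ip0 ip1 A x z + gip ip0 ip1 A y z"
    unfolding gip_def using opap_add[OF A] h0.ip_add h1.ip_add by simp
  show "x \<in> Domain A \<Longrightarrow> y \<in> Domain A \<Longrightarrow> gip ip0 ip1 A (sc0 c x) y = c * gip ip0 ip1 A x y"
    unfolding gip_def using opap_sc[OF A] h0.ip_sc h1.ip_sc by (simp add: distrib_left)
  show "x \<in> Domain A \<Longrightarrow> y \<in> Domain A \<Longrightarrow> gip ip0 ip1 A y x = cnj (gip ip0 ip1 A x y)"
    unfolding gip_def using h0.ip_sym[of x y] h1.ip_sym[of "opap A x" "opap A y"] by simp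
  show "x \<in> Domain A \<Longrightarrow> x \<noteq> 0 \<Longrightarrow> 0 < Re (gip ip0 ip1 A x x)"
    unfolding gip_def using h0.ip_pos[of x] h1.ip_self_nonneg[of "opap A x"] by simp
qed

lemma gnorm: "inorm (gip ip0 ip1 A) x = sqrt ((inorm ip0 x)\<^sup>2 + (inorm ip1 (opap A x))\<^sup>2)"
  using h0.nrm_sq h1.nrm_sq unfolding inorm_def gip_def by simp

lemma gnorm_ge0: "inorm ip0 x \<le> inorm (gip ip0 ip1 A) x"
  unfolding gnorm using h0.nrm_nonneg by (simp add: real_le_rsqrt)
lemma gnorm_ge1: "inorm ip1 (opap A x) \<le> inorm (gip ip0 ip1 A) x"
  unfolding gnorm using h1.nrm_nonneg by (simp add: real_le_rsqrt)
lemma gnorm_le: "inorm (gip ip0 ip1 A) x \<le> inorm ip0 x + inorm ip1 (opap A x)"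
  unfolding gnorm using h0.nrm_nonneg h1.nrm_nonneg by (simp add: sqrt_sum_squares_le_sum)


lemma ip0_cont: "(\<lambda>n. inorm ip0 (X n - x)) \<longlonglongrightarrow> 0 \<Longrightarrow> (\<lambda>n. ip0 q (X n)) \<longlonglongrightarrow> ip0 q x"
  by (rule h0.ip_cont_r) auto
lemma ip1_cont: "(\<lambda>n. inorm ip1 (X n - x)) \<longlonglongrightarrow> 0 \<Longrightarrow> (\<lambda>n. ip1 q (X n)) \<longlonglongrightarrow> ip1 q x"
  by (rule h1.ip_cont_r) auto

lemma adj_iff: "(y, z) \<in> adjoint_op ip0 ip1 A \<longleftrightarrow> (\<forall>x w. (x, w) \<in> A \<longrightarrow> ip1 w y = ip0 x z)"
  unfolding adjoint_op_def by auto

lemma neg_iff: fixes B :: "('x \<times> 'y::group_add) set"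
  shows "(x, z) \<in> neg_op B \<longleftrightarrow> (x, - z) \<in> B"
proof
  assume "(x, z) \<in> neg_op B"
  then obtain y where "z = - y" "(x, y) \<in> B" unfolding neg_op_def by blast
  thus "(x, - z) \<in> B" by simp
next
  assume "(x, - z) \<in> B"
  hence "(x, - (- z)) \<in> neg_op B" unfolding neg_op_def by blast
  thus "(x, z) \<in> neg_op B" by simp
qed

lemma dom_neg: fixes B :: "('x \<times> 'y::group_add) set"
  shows "Domain (neg_op B) = Domain B"
  unfolding neg_op_def by force

lemma adj_closed: "closed_op ip1 ip0 (adjoint_op ip0 ip1 A)"
  unfolding closed_op_def
proof (intro allI impI)
  fix Y Z y z
  assume mem: "\<forall>n. (Y n, Z n) \<in> adjoint_op ip0 ip1 A"
    and ly: "(\<lambda>n. inorm ip1 (Y n - y)) \<longlonglongrightarrow> 0" and lz: "(\<lambda>n. inorm ip0 (Z n - z)) \<longlonglongrightarrow> 0"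
  show "(y, z) \<in> adjoint_op ip0 ip1 A"
    unfolding adj_iff
  proof (intro allI impI)
    fix x w assume xw: "(x, w) \<in> A"
    have eq: "(\<lambda>n. ip1 w (Y n)) = (\<lambda>n. ip0 x (Z n))" using mem xw unfolding adj_iff by blast
    have "(\<lambda>n. ip1 w (Y n)) \<longlonglongrightarrow> ip1 w y" by (rule ip1_cont[OF ly])
    moreover have "(\<lambda>n. ip1 w (Y n)) \<longlonglongrightarrow> ip0 x z" unfolding eq by (rule ip0_cont[OF lz])
    ultimately show "ip1 w y = ip0 x z" by (rule LIMSEQ_unique)
  qed
qed

lemma adjn_closed: "closed_op ip1 ip0 (neg_op (adjoint_op ip0 ip1 A))"
  unfolding closed_op_def
proof (intro allI impI)
  fix Y Z y z
  assume mem: "\<forall>n. (Y n, Z n) \<in> neg_op (adjoint_op ip0 ip1 A)"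
    and ly: "(\<lambda>n. inorm ip1 (Y n - y)) \<longlonglongrightarrow> 0" and lz: "(\<lambda>n. inorm ip0 (Z n - z)) \<longlonglongrightarrow> 0"
  have "\<forall>n. (Y n, - Z n) \<in> adjoint_op ip0 ip1 A" using mem by (simp add: neg_iff)
  moreover have "(\<lambda>n. inorm ip0 (- Z n - - z)) \<longlonglongrightarrow> 0"
  proof -
    have "inorm ip0 (- Z n - - z) = inorm ip0 (Z n - z)" for n
    proof -
      have "- Z n - - z = - (Z n - z)" by (simp add: algebra_simps)
      thus ?thesis using h0.nrm_neg[of "Z n - z"] by simp
    qed
    thus ?thesis using lz by simp
  qed
  ultimately have "(y, - z) \<in> adjoint_op ip0 ip1 A"
    using adj_closed[of A, unfolded closed_op_def, rule_format, of Y "\<lambda>n. - Z n" y "- z"] ly by blast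
  thus "(y, z) \<in> neg_op (adjoint_op ip0 ip1 A)" by (simp add: neg_iff)
qed

lemma adj_0: "(0, 0) \<in> adjoint_op ip0 ip1 A"
  unfolding adj_iff using h0.ip_zero_r h1.ip_zero_r by simp

lemma adj_add: "(y, z) \<in> adjoint_op ip0 ip1 A \<Longrightarrow> (y', z') \<in> adjoint_op ip0 ip1 A
   \<Longrightarrow> (y + y', z + z') \<in> adjoint_op ip0 ip1 A"
  unfolding adj_iff using h0.ip_add_r h1.ip_add_r by simp

lemma adj_sc: "(y, z) \<in> adjoint_op ip0 ip1 A \<Longrightarrow> (sc1 c y, sc0 c z) \<in> adjoint_op ip0 ip1 A"
  unfolding adj_iff using h0.ip_sc_r h1.ip_sc_r by simp

lemma adjn_dom_0: "0 \<in> Domain (neg_op (adjoint_op ip0 ip1 A))"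
  unfolding dom_neg using adj_0 by blast
lemma adjn_dom_add: "y \<in> Domain (neg_op (adjoint_op ip0 ip1 A)) \<Longrightarrow> y' \<in> Domain (neg_op (adjoint_op ip0 ip1 A))
   \<Longrightarrow> y + y' \<in> Domain (neg_op (adjoint_op ip0 ip1 A))"
  unfolding dom_neg using adj_add by blast
lemma adjn_dom_sc: "y \<in> Domain (neg_op (adjoint_op ip0 ip1 A))
   \<Longrightarrow> sc1 c y \<in> Domain (neg_op (adjoint_op ip0 ip1 A))"
  unfolding dom_neg using adj_sc by blast

lemma adj_adj:
  assumes A: "lin_op sc0 sc1 A" and Ac: "closed_op ip0 ip1 A"
    and xy: "(x, y) \<in> adjoint_op ip1 ip0 (adjoint_op ip0 ip1 A)"
  shows "(x, y) \<in> A"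
proof -
  have Scomp: "\<exists>L\<in>A. (\<lambda>n. inorm (pip ip0 ip1) (X n - L)) \<longlonglongrightarrow> 0"
    if XA: "\<forall>n. X n \<in> A" and cau: "\<forall>e>0. \<exists>N. \<forall>m\<ge>N. \<forall>n\<ge>N. inorm (pip ip0 ip1) (X m - X n) < e" for X
  proof -
    have c0: "\<forall>e>0. \<exists>N. \<forall>m\<ge>N. \<forall>n\<ge>N. inorm ip0 (fst (X m) - fst (X n)) < e"
      using cau pnorm_ge0 by (metis fst_diff order_le_less_trans)
    obtain L0 where L0: "(\<lambda>n. inorm ip0 (fst (X n) - L0)) \<longlonglongrightarrow> 0" using comp0[OF c0] by blast
    have c1: "\<forall>e>0. \<exists>N. \<forall>m\<ge>N. \<forall>n\<ge>N. inorm ip1 (snd (X m) - snd (X n)) < e"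
      using cau pnorm_ge1 by (metis snd_diff order_le_less_trans)
    obtain L1 where L1: "(\<lambda>n. inorm ip1 (snd (X n) - L1)) \<longlonglongrightarrow> 0" using comp1[OF c1] by blast
    have "(L0, L1) \<in> A" using Ac L0 L1 XA unfolding closed_op_def by (metis prod.collapse)
    moreover have "(\<lambda>n. inorm (pip ip0 ip1) (X n - (L0, L1))) \<longlonglongrightarrow> 0"
    proof (rule squeeze0)
      show "0 \<le> inorm (pip ip0 ip1) (X n - (L0, L1))" for n using hp.nrm_nonneg by simp
      show "inorm (pip ip0 ip1) (X n - (L0, L1)) \<le> inorm ip0 (fst (X n) - L0) + inorm ip1 (snd (X n) - L1)" for n
        using pnorm_le[of "X n - (L0, L1)"] by simp
      show "(\<lambda>n. inorm ip0 (fst (X n) - L0) + inorm ip1 (snd (X n) - L1)) \<longlonglongrightarrow> 0"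
        using tendsto_add[OF L0 L1] by simp
    qed
    ultimately show ?thesis by blast
  qed
  have "\<exists>p\<in>A. \<forall>s\<in>A. pip ip0 ip1 ((x, y) - p) s = 0"
  proof (rule hp.proj)
    show "0 \<in> A" using lin_0[OF A] by (simp add: zero_prod_def)
    show "\<And>p q. p \<in> A \<Longrightarrow> q \<in> A \<Longrightarrow> p + q \<in> A" using lin_add[OF A] by (metis plus_prod_def prod.collapse)
    show "\<And>c p. p \<in> A \<Longrightarrow> pscl sc0 sc1 c p \<in> A" unfolding pscl_def using lin_sc[OF A] by (metis prod.collapse)
  qed (use Scomp in auto)
  then obtain x0 y0 where p: "(x0, y0) \<in> A" and orth: "\<And>p q. (p, q) \<in> A \<Longrightarrow> pip ip0 ip1 ((x, y) - (x0, y0)) (p, q) = 0"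
    by fastforce
  define e1 where "e1 = x - x0"
  define e2 where "e2 = y - y0"
  have orth2: "ip0 e1 p + ip1 e2 q = 0" if "(p, q) \<in> A" for p q
    using orth[OF that] unfolding pip_def e1_def e2_def by simp
  have inA: "(e2, - e1) \<in> adjoint_op ip0 ip1 A"
    unfolding adj_iff
  proof (intro allI impI)
    fix p q assume pq: "(p, q) \<in> A"
    have "cnj (ip0 e1 p + ip1 e2 q) = 0" using orth2[OF pq] by simp
    hence "ip0 p e1 + ip1 q e2 = 0" using h0.ip_sym[of e1 p] h1.ip_sym[of e2 q] by simp
    hence "ip1 q e2 = - ip0 p e1" by (metis add.commute eq_neg_iff_add_eq_0)
    thus "ip1 q e2 = ip0 p (- e1)" using h0.ip_neg_r[of e1 p] by simp
  qed
  have a1: "ip0 (- e1) x = ip1 e2 y" using xy inA unfolding twoH.adj_iff[OF swap] by blast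
  have "ip1 y0 e2 = ip0 x0 (- e1)" using inA p unfolding adj_iff by blast
  hence a2: "ip0 (- e1) x0 = ip1 e2 y0"
    using h0.ip_sym[of x0 "- e1"] h1.ip_sym[of y0 e2] by simp
  have "ip0 (- e1) e1 = ip0 (- e1) x - ip0 (- e1) x0" unfolding e1_def[of] by (rule h0.ip_diff_r) auto
  moreover have "ip1 e2 e2 = ip1 e2 y - ip1 e2 y0" unfolding e2_def[of] by (rule h1.ip_diff_r) auto
  ultimately have "ip0 (- e1) e1 = ip1 e2 e2" using a1 a2 by simp
  hence "- ip0 e1 e1 = ip1 e2 e2" using h0.ip_neg_l by simp
  hence "- Re (ip0 e1 e1) = Re (ip1 e2 e2)" by (metis uminus_complex.sel(1))
  hence "Re (ip0 e1 e1) = 0" "Re (ip1 e2 e2) = 0"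
    using h0.ip_self_nonneg[of e1] h1.ip_self_nonneg[of e2] by simp_all
  hence "e1 = 0" "e2 = 0" using h0.ip_pos[of e1] h1.ip_pos[of e2] by force+
  thus ?thesis using p unfolding e1_def e2_def by simp
qed


lemma gnorm_nonneg: "0 \<le> inorm (gip ip0 ip1 A) x"
  unfolding gnorm by simp

lemma graph_complete:
  assumes A: "lin_op sc0 sc1 A" and Ac: "closed_op ip0 ip1 A" and SA: "S \<subseteq> Domain A"
    and hS: "\<And>X x. (\<forall>n. X n \<in> S) \<Longrightarrow> x \<in> Domain A
        \<Longrightarrow> (\<lambda>n. inorm (gip ip0 ip1 A) (X n - x)) \<longlonglongrightarrow> 0 \<Longrightarrow> x \<in> S"
    and XS: "\<forall>n. X n \<in> S"
    and cau: "\<forall>e>0. \<exists>N. \<forall>m\<ge>N. \<forall>n\<ge>N. inorm (gip ip0 ip1 A) (X m - X n) < e"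
  shows "\<exists>L\<in>S. (\<lambda>n. inorm (gip ip0 ip1 A) (X n - L)) \<longlonglongrightarrow> 0"
proof -
  have XD: "X n \<in> Domain A" for n using XS SA by blast
  have c0: "\<forall>e>0. \<exists>N. \<forall>m\<ge>N. \<forall>n\<ge>N. inorm ip0 (X m - X n) < e"
    using cau gnorm_ge0 by (meson order_le_less_trans)
  obtain x where x: "(\<lambda>n. inorm ip0 (X n - x)) \<longlonglongrightarrow> 0" using comp0[OF c0] by blast
  have od: "opap A (X m) - opap A (X n) = opap A (X m - X n)" for m n
    using opap_diff[OF A XD XD] by simp
  have c1: "\<forall>e>0. \<exists>N. \<forall>m\<ge>N. \<forall>n\<ge>N. inorm ip1 (opap A (X m) - opap A (X n)) < e"
    unfolding od using cau gnorm_ge1 by (meson order_le_less_trans)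
  obtain y where y: "(\<lambda>n. inorm ip1 (opap A (X n) - y)) \<longlonglongrightarrow> 0" using comp1[OF c1] by blast
  have xy: "(x, y) \<in> A"
    using Ac[unfolded closed_op_def, rule_format, of X "\<lambda>n. opap A (X n)" x y] opap_in[OF A XD] x y
    by blast
  hence xD: "x \<in> Domain A" and ox: "opap A x = y" using opap_eq[OF A] by auto
  have lim: "(\<lambda>n. inorm (gip ip0 ip1 A) (X n - x)) \<longlonglongrightarrow> 0"
  proof (rule squeeze0)
    show "0 \<le> inorm (gip ip0 ip1 A) (X n - x)" for n by (rule gnorm_nonneg)
    show "inorm (gip ip0 ip1 A) (X n - x) \<le> inorm ip0 (X n - x) + inorm ip1 (opap A (X n) - y)" for n
      using gnorm_le[of A "X n - x"] opap_diff[OF A XD xD] ox by simp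
    show "(\<lambda>n. inorm ip0 (X n - x) + inorm ip1 (opap A (X n) - y)) \<longlonglongrightarrow> 0"
      using tendsto_add[OF x y] by simp
  qed
  thus ?thesis using hS[OF XS xD lim] by blast
qed

lemma bd_sub: "BD ip0 ip1 A A0 \<subseteq> Domain A"
  unfolding BD_def by blast

lemma bd_orth: "u \<in> BD ip0 ip1 A A0 \<Longrightarrow> w \<in> Domain A0 \<Longrightarrow> gip ip0 ip1 A u w = 0"
  unfolding BD_def by blast

context
  fixes A :: "('a \<times> 'b) set" and A0 :: "('a \<times> 'b) set"
  assumes A: "lin_op sc0 sc1 A" and A0A: "Domain A0 \<subseteq> Domain A"
begin

interpretation g: sform sc0 "Domain A" "gip ip0 ip1 A" by (rule graph_sform[OF A])

lemma bd_0: "0 \<in> BD ip0 ip1 A A0"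
  unfolding BD_def using g.V0 g.ip_zero_l A0A by blast

lemma bd_add: assumes u: "u \<in> BD ip0 ip1 A A0" and v: "v \<in> BD ip0 ip1 A A0"
  shows "u + v \<in> BD ip0 ip1 A A0"
proof -
  have uD: "u \<in> Domain A" and vD: "v \<in> Domain A" using u v bd_sub by blast+
  have "\<forall>w\<in>Domain A0. gip ip0 ip1 A (u + v) w = 0"
  proof
    fix w assume w: "w \<in> Domain A0" hence wD: "w \<in> Domain A" using A0A by blast
    show "gip ip0 ip1 A (u + v) w = 0" using g.ip_add[OF uD vD wD] bd_orth[OF u w] bd_orth[OF v w] by simp
  qed
  thus ?thesis unfolding BD_def using g.Vadd[OF uD vD] by blast
qed

lemma bd_sc: assumes u: "u \<in> BD ip0 ip1 A A0"
  shows "sc0 c u \<in> BD ip0 ip1 A A0"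
proof -
  have uD: "u \<in> Domain A" using u bd_sub by blast
  have "\<forall>w\<in>Domain A0. gip ip0 ip1 A (sc0 c u) w = 0"
  proof
    fix w assume w: "w \<in> Domain A0" hence wD: "w \<in> Domain A" using A0A by blast
    show "gip ip0 ip1 A (sc0 c u) w = 0" using g.ip_sc[OF uD wD] bd_orth[OF u w] by simp
  qed
  thus ?thesis unfolding BD_def using g.Vsc[OF uD] by blast
qed

lemma bd_diff: assumes u: "u \<in> BD ip0 ip1 A A0" and v: "v \<in> BD ip0 ip1 A A0"
  shows "u - v \<in> BD ip0 ip1 A A0"
proof -
  have uD: "u \<in> Domain A" and vD: "v \<in> Domain A" using u v bd_sub by blast+
  have "\<forall>w\<in>Domain A0. gip ip0 ip1 A (u - v) w = 0"
  proof
    fix w assume w: "w \<in> Domain A0" hence wD: "w \<in> Domain A" using A0A by blast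
    show "gip ip0 ip1 A (u - v) w = 0" using g.ip_diff_l[OF uD vD wD] bd_orth[OF u w] bd_orth[OF v w] by simp
  qed
  thus ?thesis unfolding BD_def using g.Vdiff[OF uD vD] by blast
qed

lemma piBD_eq:
  assumes u: "u \<in> Domain A" and w: "w \<in> BD ip0 ip1 A A0"
    and o: "\<forall>z\<in>BD ip0 ip1 A A0. gip ip0 ip1 A (u - w) z = 0"
  shows "piBD ip0 ip1 A A0 u = w"
  unfolding piBD_def
proof (rule the_equality)
  show "w \<in> BD ip0 ip1 A A0 \<and> (\<forall>z\<in>BD ip0 ip1 A A0. gip ip0 ip1 A (u - w) z = 0)" using w o by blast
  fix w' assume w': "w' \<in> BD ip0 ip1 A A0 \<and> (\<forall>z\<in>BD ip0 ip1 A A0. gip ip0 ip1 A (u - w') z = 0)"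
  define d where "d = w - w'"
  have dB: "d \<in> BD ip0 ip1 A A0" unfolding d_def using bd_diff w w' by blast
  have dD: "d \<in> Domain A" and wD: "w \<in> Domain A" and w'D: "w' \<in> Domain A"
    using dB w w' bd_sub by blast+
  have "u - w' - (u - w) = d" unfolding d_def by simp
  hence "gip ip0 ip1 A d d = gip ip0 ip1 A (u - w') d - gip ip0 ip1 A (u - w) d"
    using g.ip_diff_l[of "u - w'" "u - w" d] g.Vdiff u wD w'D dD by simp
  also have "\<dots> = 0" using o w' dB by simp
  finally have "d = 0" using g.ip_pos[OF dD] by (cases "d = 0") auto
  thus "w' = w" unfolding d_def by simp
qed

lemma decomp:
  assumes Ac: "closed_op ip0 ip1 A" and A0c: "closed_op ip0 ip1 A0" and A0s: "A0 \<subseteq> A"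
    and D0: "0 \<in> Domain A0" and Dadd: "\<And>x y. x \<in> Domain A0 \<Longrightarrow> y \<in> Domain A0 \<Longrightarrow> x + y \<in> Domain A0"
    and Dsc: "\<And>c x. x \<in> Domain A0 \<Longrightarrow> sc0 c x \<in> Domain A0"
    and u: "u \<in> Domain A"
  shows "piBD ip0 ip1 A A0 u \<in> BD ip0 ip1 A A0 \<and> u - piBD ip0 ip1 A A0 u \<in> Domain A0
     \<and> (\<forall>z\<in>BD ip0 ip1 A A0. gip ip0 ip1 A (u - piBD ip0 ip1 A A0 u) z = 0)"
proof -
  have hS: "x \<in> Domain A0" if XS: "\<forall>n. X n \<in> Domain A0" and xD: "x \<in> Domain A"
      and lim: "(\<lambda>n. inorm (gip ip0 ip1 A) (X n - x)) \<longlonglongrightarrow> 0" for X x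
  proof -
    have XD: "X n \<in> Domain A" for n using XS A0A by blast
    have inA0: "(X n, opap A (X n)) \<in> A0" for n
    proof -
      obtain z where "(X n, z) \<in> A0" using XS by blast
      moreover hence "opap A (X n) = z" using A0s opap_eq[OF A] by blast
      ultimately show ?thesis by simp
    qed
    have l0: "(\<lambda>n. inorm ip0 (X n - x)) \<longlonglongrightarrow> 0"
      by (rule squeeze0[OF _ gnorm_ge0 lim]) (rule h0.nrm_nonneg, simp)
    have l1: "(\<lambda>n. inorm ip1 (opap A (X n) - opap A x)) \<longlonglongrightarrow> 0"
    proof (rule squeeze0[OF _ _ lim])
      show "0 \<le> inorm ip1 (opap A (X n) - opap A x)" for n by (rule h1.nrm_nonneg) simp
      show "inorm ip1 (opap A (X n) - opap A x) \<le> inorm (gip ip0 ip1 A) (X n - x)" for n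
        using gnorm_ge1[of A "X n - x"] opap_diff[OF A XD xD] by simp
    qed
    have "(x, opap A x) \<in> A0"
      using A0c[unfolded closed_op_def, rule_format, of X "\<lambda>n. opap A (X n)" x "opap A x"] inA0 l0 l1
      by blast
    thus ?thesis by blast
  qed
  have "\<exists>p\<in>Domain A0. \<forall>s\<in>Domain A0. gip ip0 ip1 A (u - p) s = 0"
  proof (rule g.proj[OF A0A D0 Dadd Dsc _ u])
    fix X :: "nat \<Rightarrow> 'a" assume "\<forall>n. X n \<in> Domain A0"
      "\<forall>e>0. \<exists>N. \<forall>m\<ge>N. \<forall>n\<ge>N. inorm (gip ip0 ip1 A) (X m - X n) < e"
    thus "\<exists>L\<in>Domain A0. (\<lambda>n. inorm (gip ip0 ip1 A) (X n - L)) \<longlonglongrightarrow> 0"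
      by (intro graph_complete[OF A Ac A0A]) (auto intro: hS)
  qed
  then obtain p where p: "p \<in> Domain A0" and po: "\<forall>s\<in>Domain A0. gip ip0 ip1 A (u - p) s = 0" by blast
  define w where "w = u - p"
  have pD: "p \<in> Domain A" using p A0A by blast
  have wB: "w \<in> BD ip0 ip1 A A0" unfolding BD_def w_def using po g.Vdiff u pD by blast
  have wo: "\<forall>z\<in>BD ip0 ip1 A A0. gip ip0 ip1 A (u - w) z = 0"
  proof
    fix z assume z: "z \<in> BD ip0 ip1 A A0"
    hence zD: "z \<in> Domain A" using bd_sub by blast
    have "gip ip0 ip1 A (u - w) z = gip ip0 ip1 A p z" unfolding w_def by simp
    also have "\<dots> = cnj (gip ip0 ip1 A z p)" using g.ip_sym[OF zD pD] .
    also have "\<dots> = 0" using bd_orth[OF z p] by simp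
    finally show "gip ip0 ip1 A (u - w) z = 0" .
  qed
  have "piBD ip0 ip1 A A0 u = w" by (rule piBD_eq[OF u wB wo])
  thus ?thesis using wB wo p unfolding w_def by simp
qed

end


lemma bd_inv:
  assumes A: "lin_op sc0 sc1 A" and B: "lin_op sc1 sc0 B" and Bc: "closed_op ip1 ip0 B"
    and sub: "neg_op (adjoint_op ip1 ip0 B) \<subseteq> A"
    and w: "w \<in> BD ip0 ip1 A (neg_op (adjoint_op ip1 ip0 B))"
  shows "(opap A w, w) \<in> B"
proof (rule twoH.adj_adj[OF swap B Bc])
  have wD: "w \<in> Domain A" using w bd_sub by blast
  show "(opap A w, w) \<in> adjoint_op ip0 ip1 (adjoint_op ip1 ip0 B)"
    unfolding adj_iff
  proof (intro allI impI)
    fix z t assume zt: "(z, t) \<in> adjoint_op ip1 ip0 B"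
    hence zt': "(z, - t) \<in> neg_op (adjoint_op ip1 ip0 B)" by (simp add: neg_iff)
    hence zA: "(z, - t) \<in> A" using sub by blast
    hence oz: "opap A z = - t" using opap_eq[OF A] by blast
    have "gip ip0 ip1 A w z = 0" using bd_orth[OF w] zt' by blast
    hence "ip0 w z + ip1 (opap A w) (- t) = 0" unfolding gip_def oz .
    hence "ip0 w z = ip1 (opap A w) t" using h1.ip_neg_r[of t "opap A w"] by (simp add: add_eq_0_iff2)
    hence "cnj (ip0 w z) = cnj (ip1 (opap A w) t)" by simp
    thus "ip1 t (opap A w) = ip0 z w" using h0.ip_sym[of w z] h1.ip_sym[of "opap A w" t] by simp
  qed
qed

lemma green1:
  assumes A: "lin_op sc0 sc1 A" and B: "lin_op sc1 sc0 B"
    and sub: "neg_op (adjoint_op ip0 ip1 A) \<subseteq> B"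
    and q: "q \<in> Domain (neg_op (adjoint_op ip0 ip1 A))" and v: "v \<in> Domain A"
  shows "ip1 q (opap A v) + ip0 (opap B q) v = 0"
proof -
  obtain r where qr: "(q, r) \<in> neg_op (adjoint_op ip0 ip1 A)" using q by blast
  hence "(q, - r) \<in> adjoint_op ip0 ip1 A" by (simp add: neg_iff)
  hence "ip1 (opap A v) q = ip0 v (- r)" using opap_in[OF A v] unfolding adj_iff by blast
  hence "ip1 (opap A v) q = - ip0 v r" using h0.ip_neg_r by simp
  hence "ip1 q (opap A v) = - ip0 r v" using h0.ip_sym[of v r] h1.ip_sym[of "opap A v" q] by simp
  moreover have "opap B q = r" using twoH.opap_eq[OF swap B] qr sub by blast
  ultimately show ?thesis by simp
qed

lemma green2:
  assumes A: "lin_op sc0 sc1 A" and B: "lin_op sc1 sc0 B"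
    and sub: "neg_op (adjoint_op ip1 ip0 B) \<subseteq> A"
    and q: "q \<in> Domain B" and v: "v \<in> Domain (neg_op (adjoint_op ip1 ip0 B))"
  shows "ip1 q (opap A v) + ip0 (opap B q) v = 0"
proof -
  obtain t where vt: "(v, t) \<in> neg_op (adjoint_op ip1 ip0 B)" using v by blast
  hence "(v, - t) \<in> adjoint_op ip1 ip0 B" by (simp add: neg_iff)
  hence "ip0 (opap B q) v = ip1 q (- t)"
    using twoH.opap_in[OF swap B q] unfolding twoH.adj_iff[OF swap] by blast
  hence "ip0 (opap B q) v = - ip1 q t" using h1.ip_neg_r by simp
  moreover have "opap A v = t" using opap_eq[OF A] vt sub by blast
  ultimately show ?thesis by simp
qed

lemma riesz:
  fixes scH :: "complex \<Rightarrow> 'c::ab_group_add \<Rightarrow> 'c" and ipH and \<kappa> :: "'a \<Rightarrow> 'c"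
  assumes A: "lin_op sc0 sc1 A" and Ac: "closed_op ip0 ip1 A" and A0A: "Domain A0 \<subseteq> Domain A"
    and HH: "cHilbert scH ipH"
    and kadd: "\<forall>u\<in>BD ip0 ip1 A A0. \<forall>v\<in>BD ip0 ip1 A A0. \<kappa> (u + v) = \<kappa> u + \<kappa> v"
    and ksc: "\<forall>c. \<forall>u\<in>BD ip0 ip1 A A0. \<kappa> (sc0 c u) = scH c (\<kappa> u)"
    and kbd: "\<exists>C. \<forall>u\<in>BD ip0 ip1 A A0. inorm ipH (\<kappa> u) \<le> C * sqrt (Re (gip ip0 ip1 A u u))"
  shows "\<exists>w\<in>BD ip0 ip1 A A0. \<forall>u\<in>BD ip0 ip1 A A0. ipH (\<kappa> u) \<psi> = gip ip0 ip1 A u w"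
proof -
  interpret g: sform sc0 "Domain A" "gip ip0 ip1 A" by (rule graph_sform[OF A])
  interpret hH: sform scH UNIV ipH by (rule cH_sform[OF HH])
  define B where "B = BD ip0 ip1 A A0"
  have BD: "B \<subseteq> Domain A" unfolding B_def by (rule bd_sub)
  have B0: "0 \<in> B" and Badd: "\<And>u v. u \<in> B \<Longrightarrow> v \<in> B \<Longrightarrow> u + v \<in> B"
    and Bsc: "\<And>c u. u \<in> B \<Longrightarrow> sc0 c u \<in> B" and Bdiff: "\<And>u v. u \<in> B \<Longrightarrow> v \<in> B \<Longrightarrow> u - v \<in> B"
    unfolding B_def using bd_0[OF A A0A] bd_add[OF A A0A] bd_sc[OF A A0A] bd_diff[OF A A0A] by auto
  define f where "f u = ipH (\<kappa> u) \<psi>" for u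
  have fadd: "f (u + v) = f u + f v" if "u \<in> B" "v \<in> B" for u v
    unfolding f_def using kadd that hH.ip_add B_def by simp
  have fsc: "f (sc0 c u) = c * f u" if "u \<in> B" for u c
    unfolding f_def using ksc that hH.ip_sc B_def by simp
  have fdiff: "f (u - v) = f u - f v" if "u \<in> B" "v \<in> B" for u v
    using fadd[OF Bdiff[OF that] that(2)] by simp
  have f0: "f 0 = 0" using fadd[OF B0 B0] by simp
  obtain C where C: "\<forall>u\<in>B. inorm ipH (\<kappa> u) \<le> C * inorm (gip ip0 ip1 A) u"
    using kbd unfolding B_def inorm_def by blast
  define K where "K = C * inorm ipH \<psi>"
  have fbd: "cmod (f u) \<le> K * inorm (gip ip0 ip1 A) u" if "u \<in> B" for u
  proof -
    have "cmod (f u) \<le> inorm ipH (\<kappa> u) * inorm ipH \<psi>" unfolding f_def by (rule hH.cauchy_schwarz) auto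
    also have "\<dots> \<le> C * inorm (gip ip0 ip1 A) u * inorm ipH \<psi>"
      by (rule mult_right_mono) (use C that hH.nrm_nonneg in auto)
    finally show ?thesis unfolding K_def by (simp add: mult_ac)
  qed
  show ?thesis
  proof (cases "\<forall>u\<in>B. f u = 0")
    case True
    have "\<forall>u\<in>B. ipH (\<kappa> u) \<psi> = gip ip0 ip1 A u 0"
      using True g.ip_zero_r BD unfolding f_def by (metis subsetD)
    thus ?thesis using B0 B_def by blast
  next
    case False
    then obtain x0 where x0: "x0 \<in> B" "f x0 \<noteq> 0" by blast
    define N where "N = {u \<in> B. f u = 0}"
    have hS: "x \<in> N" if XS: "\<forall>n. X n \<in> N" and xD: "x \<in> Domain A"
      and lim: "(\<lambda>n. inorm (gip ip0 ip1 A) (X n - x)) \<longlonglongrightarrow> 0" for X x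
    proof -
      have XB: "X n \<in> B" for n using XS N_def by blast
      have XD: "X n \<in> Domain A" for n using XB BD by blast
      have nc: "inorm (gip ip0 ip1 A) (x - X n) = inorm (gip ip0 ip1 A) (X n - x)" for n
        using g.nrm_commute[OF xD XD] .
      have xB: "x \<in> B" unfolding B_def BD_def
      proof (intro CollectI conjI xD ballI)
        fix z assume z: "z \<in> Domain A0"
        hence zD: "z \<in> Domain A" using A0A by blast
        have "cmod (gip ip0 ip1 A x z) \<le> inorm (gip ip0 ip1 A) z * inorm (gip ip0 ip1 A) (X n - x)" for n
        proof -
          have "gip ip0 ip1 A (x - X n) z = gip ip0 ip1 A x z - gip ip0 ip1 A (X n) z"
            using g.ip_diff_l[OF xD XD zD] .
          moreover have "gip ip0 ip1 A (X n) z = 0" using bd_orth[of "X n" A A0 z] XB z B_def by simp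
          ultimately have "gip ip0 ip1 A x z = gip ip0 ip1 A (x - X n) z" by simp
          moreover have "cmod (gip ip0 ip1 A (x - X n) z) \<le> inorm (gip ip0 ip1 A) (x - X n) * inorm (gip ip0 ip1 A) z"
            using g.cauchy_schwarz g.Vdiff xD XD zD by blast
          ultimately show ?thesis using nc by (simp add: mult_ac)
        qed
        hence "cmod (gip ip0 ip1 A x z) \<le> 0" by (rule le_lim0[OF _ lim])
        thus "gip ip0 ip1 A x z = 0" by simp
      qed
      have "cmod (f x) \<le> K * inorm (gip ip0 ip1 A) (X n - x)" for n
      proof -
        have "f x = f (x - X n)" using fdiff[OF xB XB] XS N_def by simp
        thus ?thesis using fbd[OF Bdiff[OF xB XB]] nc by simp
      qed
      hence "cmod (f x) \<le> 0" by (rule le_lim0[OF _ lim])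
      thus ?thesis using xB N_def by simp
    qed
    have ND: "N \<subseteq> Domain A" using BD N_def by blast
    have "\<exists>p\<in>N. \<forall>s\<in>N. gip ip0 ip1 A (x0 - p) s = 0"
    proof (rule g.proj)
      show "N \<subseteq> Domain A" by (rule ND)
      show "0 \<in> N" using B0 f0 N_def by simp
      show "\<And>u v. u \<in> N \<Longrightarrow> v \<in> N \<Longrightarrow> u + v \<in> N" using Badd fadd N_def by simp
      show "\<And>c u. u \<in> N \<Longrightarrow> sc0 c u \<in> N" using Bsc fsc N_def by simp
      show "x0 \<in> Domain A" using x0 BD by blast
      fix X :: "nat \<Rightarrow> 'a" assume "\<forall>n. X n \<in> N"
        "\<forall>e>0. \<exists>N. \<forall>m\<ge>N. \<forall>n\<ge>N. inorm (gip ip0 ip1 A) (X m - X n) < e"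
      thus "\<exists>L\<in>N. (\<lambda>n. inorm (gip ip0 ip1 A) (X n - L)) \<longlonglongrightarrow> 0"
        by (intro graph_complete[OF A Ac ND]) (auto intro: hS)
    qed
    then obtain p where p: "p \<in> N" and po: "\<forall>s\<in>N. gip ip0 ip1 A (x0 - p) s = 0" by blast
    define z where "z = x0 - p"
    have pB: "p \<in> B" using p N_def by blast
    have zB: "z \<in> B" unfolding z_def using Bdiff x0(1) pB by blast
    have zD: "z \<in> Domain A" using zB BD by blast
    have fz: "f z = f x0" unfolding z_def using fdiff[OF x0(1) pB] p N_def by simp
    hence fz0: "f z \<noteq> 0" using x0 by simp
    hence "z \<noteq> 0" using f0 by auto
    hence rpos: "Re (gip ip0 ip1 A z z) > 0" using g.ip_pos zD by blast
    define r where "r = gip ip0 ip1 A z z"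
    have rreal: "r = complex_of_real (Re r)" unfolding r_def by (rule g.ip_self_real[OF zD])
    have r0: "r \<noteq> 0" using rpos r_def by auto
    have key: "gip ip0 ip1 A u z = f u / f z * r" if u: "u \<in> B" for u
    proof -
      define c where "c = f u / f z"
      have uD: "u \<in> Domain A" using u BD by blast
      have sB: "u - sc0 c z \<in> B" using Bdiff[OF u Bsc[OF zB]] .
      have "f (u - sc0 c z) = f u - c * f z" using fdiff[OF u Bsc[OF zB]] fsc[OF zB] by simp
      also have "\<dots> = 0" unfolding c_def using fz0 by simp
      finally have "u - sc0 c z \<in> N" using sB N_def by simp
      hence "gip ip0 ip1 A z (u - sc0 c z) = 0" using po z_def by simp
      hence "gip ip0 ip1 A z u - cnj c * r = 0"
        using g.ip_diff_r[OF uD g.Vsc[OF zD] zD] g.ip_sc_r[OF zD zD] r_def by simp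
      hence "gip ip0 ip1 A z u = cnj c * r" by simp
      hence "gip ip0 ip1 A u z = cnj (cnj c * r)" using g.ip_sym[OF uD zD] by (metis complex_cnj_cnj)
      also have "\<dots> = c * r" using rreal by (metis complex_cnj_cnj complex_cnj_complex_of_real complex_cnj_mult)
      finally show ?thesis unfolding c_def .
    qed
    define w where "w = sc0 (cnj (f z / r)) z"
    have wB: "w \<in> B" unfolding w_def using Bsc zB by blast
    have "\<forall>u\<in>B. f u = gip ip0 ip1 A u w"
    proof
      fix u assume u: "u \<in> B"
      have uD: "u \<in> Domain A" using u BD by blast
      have "gip ip0 ip1 A u w = (f z / r) * gip ip0 ip1 A u z"
        unfolding w_def using g.ip_sc_r[OF zD uD] by simp
      also have "\<dots> = f u" using key[OF u] fz0 r0 by (simp add: field_simps)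
      finally show "f u = gip ip0 ip1 A u w" by simp
    qed
    thus ?thesis using wB unfolding B_def f_def by blast
  qed
qed

lemma kadj:
  fixes scH :: "complex \<Rightarrow> 'c::ab_group_add \<Rightarrow> 'c" and ipH and \<kappa> :: "'a \<Rightarrow> 'c"
  assumes A: "lin_op sc0 sc1 A" and Ac: "closed_op ip0 ip1 A" and A0A: "Domain A0 \<subseteq> Domain A"
    and HH: "cHilbert scH ipH"
    and kadd: "\<forall>u\<in>BD ip0 ip1 A A0. \<forall>v\<in>BD ip0 ip1 A A0. \<kappa> (u + v) = \<kappa> u + \<kappa> v"
    and ksc: "\<forall>c. \<forall>u\<in>BD ip0 ip1 A A0. \<kappa> (sc0 c u) = scH c (\<kappa> u)"
    and kbd: "\<exists>C. \<forall>u\<in>BD ip0 ip1 A A0. inorm ipH (\<kappa> u) \<le> C * sqrt (Re (gip ip0 ip1 A u u))"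
  shows "kappa_adj ip0 ip1 A A0 ipH \<kappa> \<psi> \<in> BD ip0 ip1 A A0 \<and>
    (\<forall>u\<in>BD ip0 ip1 A A0. ipH (\<kappa> u) \<psi> = gip ip0 ip1 A u (kappa_adj ip0 ip1 A A0 ipH \<kappa> \<psi>))"
proof -
  interpret g: sform sc0 "Domain A" "gip ip0 ip1 A" by (rule graph_sform[OF A])
  obtain w where w: "w \<in> BD ip0 ip1 A A0" "\<forall>u\<in>BD ip0 ip1 A A0. ipH (\<kappa> u) \<psi> = gip ip0 ip1 A u w"
    using riesz[OF A Ac A0A HH kadd ksc kbd] by blast
  have "kappa_adj ip0 ip1 A A0 ipH \<kappa> \<psi> = w"
    unfolding kappa_adj_def
  proof (rule the_equality)
    show "w \<in> BD ip0 ip1 A A0 \<and> (\<forall>u\<in>BD ip0 ip1 A A0. ipH (\<kappa> u) \<psi> = gip ip0 ip1 A u w)" using w by blast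
    fix w' assume w': "w' \<in> BD ip0 ip1 A A0 \<and> (\<forall>u\<in>BD ip0 ip1 A A0. ipH (\<kappa> u) \<psi> = gip ip0 ip1 A u w')"
    define d where "d = w' - w"
    have dB: "d \<in> BD ip0 ip1 A A0" unfolding d_def using bd_diff[OF A A0A] w w' by blast
    have dD: "d \<in> Domain A" and wD: "w \<in> Domain A" and w'D: "w' \<in> Domain A"
      using dB w w' bd_sub by blast+
    have "gip ip0 ip1 A d d = gip ip0 ip1 A d w' - gip ip0 ip1 A d w"
      unfolding d_def[of] using g.ip_diff_r[OF w'D wD dD] by (simp add: d_def)
    also have "\<dots> = 0" using w w' dB by auto
    finally have "d = 0" using g.ip_pos[OF dD] by (cases "d = 0") auto
    thus "w' = w" unfolding d_def by simp
  qed
  thus ?thesis using w by simp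
qed

end

theorem proposition5p10:
  fixes sc0 :: "complex \<Rightarrow> 'a::ab_group_add \<Rightarrow> 'a" and ip0 :: "'a \<Rightarrow> 'a \<Rightarrow> complex"
    and sc1 :: "complex \<Rightarrow> 'b::ab_group_add \<Rightarrow> 'b" and ip1 :: "'b \<Rightarrow> 'b \<Rightarrow> complex"
    and scH :: "complex \<Rightarrow> 'c::ab_group_add \<Rightarrow> 'c" and ipH :: "'c \<Rightarrow> 'c \<Rightarrow> complex"
    and G :: "('a \<times> 'b) set" and D :: "('b \<times> 'a) set"
    and m :: "'a \<Rightarrow> 'a" and a :: "'b \<Rightarrow> 'b" and \<kappa> :: "'a \<Rightarrow> 'c"
  assumes H0: "cHilbert sc0 ip0" and H1: "cHilbert sc1 ip1" and HH: "cHilbert scH ipH"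
    and G_op: "lin_op sc0 sc1 G" and G_dense: "dense_in ip0 (Domain G)"
    and G_closed: "closed_op ip0 ip1 G"
    and D_op: "lin_op sc1 sc0 D" and D_dense: "dense_in ip1 (Domain D)"
    and D_closed: "closed_op ip1 ip0 D"
    and GD: "neg_op (adjoint_op ip0 ip1 G) \<subseteq> D"
    and m_bd: "bounded_lin sc0 ip0 sc0 ip0 m"
    and a_bd: "bounded_lin sc1 ip1 sc1 ip1 a" and a_coer: "coercive ip1 a"
    and \<kappa>_add: "\<forall>u\<in>BD ip0 ip1 G (neg_op (adjoint_op ip1 ip0 D)).
         \<forall>v\<in>BD ip0 ip1 G (neg_op (adjoint_op ip1 ip0 D)). \<kappa> (u + v) = \<kappa> u + \<kappa> v"
    and \<kappa>_scale: "\<forall>c. \<forall>u\<in>BD ip0 ip1 G (neg_op (adjoint_op ip1 ip0 D)). \<kappa> (sc0 c u) = scH c (\<kappa> u)"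
    and \<kappa>_bd: "\<exists>C. \<forall>u\<in>BD ip0 ip1 G (neg_op (adjoint_op ip1 ip0 D)).
         inorm ipH (\<kappa> u) \<le> C * sqrt (Re (gip ip0 ip1 G u u))"
    and \<kappa>_inj: "inj_on \<kappa> (BD ip0 ip1 G (neg_op (adjoint_op ip1 ip0 D)))"
    and \<kappa>_dense: "dense_in ipH (\<kappa> ` BD ip0 ip1 G (neg_op (adjoint_op ip1 ip0 D)))"
  shows "DtN_H ip0 ip1 G D m a ipH \<kappa> =
    {(\<phi>, \<psi>). \<exists>u\<in>Domain G.
        \<kappa> (piBD ip0 ip1 G (neg_op (adjoint_op ip1 ip0 D)) u) = \<phi> \<and>
        (\<forall>v\<in>Domain G. ip1 (a (opap G u)) (opap G v) + ip0 (m u) v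
            = ipH \<psi> (\<kappa> (piBD ip0 ip1 G (neg_op (adjoint_op ip1 ip0 D)) v)))}"
proof -
  interpret T: twoH sc0 ip0 sc1 ip1 by (rule twoH.intro[OF H0 H1])
  interpret S: twoH sc1 ip1 sc0 ip0 by (rule twoH.intro[OF H1 H0])
  interpret gG: sform sc0 "Domain G" "gip ip0 ip1 G" by (rule T.graph_sform[OF G_op])
  interpret gD: sform sc1 "Domain D" "gip ip1 ip0 D" by (rule S.graph_sform[OF D_op])
  interpret hH: sform scH UNIV ipH by (rule cH_sform[OF HH])
  define G0 where "G0 = neg_op (adjoint_op ip1 ip0 D)"
  define D0 where "D0 = neg_op (adjoint_op ip0 ip1 G)"
  define BG where "BG = BD ip0 ip1 G G0"
  define BDd where "BDd = BD ip1 ip0 D D0"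
  have D0sub: "D0 \<subseteq> D" using GD D0_def by simp
  have G0sub: "G0 \<subseteq> G"
  proof
    fix p assume p: "p \<in> G0"
    obtain v t where pvt: "p = (v, t)" by (cases p)
    have vt: "(v, - t) \<in> adjoint_op ip1 ip0 D" using p pvt G0_def by (simp add: T.neg_iff)
    have "(v, t) \<in> adjoint_op ip1 ip0 (adjoint_op ip0 ip1 G)"
      unfolding S.adj_iff
    proof (intro allI impI)
      fix y w assume yw: "(y, w) \<in> adjoint_op ip0 ip1 G"
      hence "(y, - w) \<in> D" using D0sub D0_def by (auto simp: T.neg_iff)
      hence "ip0 (- w) v = ip1 y (- t)" using vt unfolding S.adj_iff by blast
      thus "ip0 w v = ip1 y t" using T.h0.ip_neg_l[of w v] T.h1.ip_neg_r[of t y] by simp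
    qed
    thus "p \<in> G" using T.adj_adj[OF G_op G_closed] pvt by blast
  qed
  have G0A: "Domain G0 \<subseteq> Domain G" using G0sub by blast
  have D0A: "Domain D0 \<subseteq> Domain D" using D0sub by blast
  have G0c: "closed_op ip0 ip1 G0" unfolding G0_def by (rule S.adjn_closed)
  have D0c: "closed_op ip1 ip0 D0" unfolding D0_def by (rule T.adjn_closed)
  have decG: "piBD ip0 ip1 G G0 u \<in> BG \<and> u - piBD ip0 ip1 G G0 u \<in> Domain G0
     \<and> (\<forall>z\<in>BG. gip ip0 ip1 G (u - piBD ip0 ip1 G G0 u) z = 0)" if u: "u \<in> Domain G" for u
    unfolding BG_def
    by (rule T.decomp[OF G_op G0A G_closed G0c G0sub _ _ _ u])
      (simp_all add: G0_def S.adjn_dom_0 S.adjn_dom_add S.adjn_dom_sc)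
  have decD: "piBD ip1 ip0 D D0 q \<in> BDd \<and> q - piBD ip1 ip0 D D0 q \<in> Domain D0
     \<and> (\<forall>z\<in>BDd. gip ip1 ip0 D (q - piBD ip1 ip0 D D0 q) z = 0)" if q: "q \<in> Domain D" for q
    unfolding BDd_def
    by (rule S.decomp[OF D_op D0A D_closed D0c D0sub _ _ _ q])
      (simp_all add: D0_def T.adjn_dom_0 T.adjn_dom_add T.adjn_dom_sc)
  have BGD: "BG \<subseteq> Domain G" unfolding BG_def by (rule T.bd_sub)
  have BDD: "BDd \<subseteq> Domain D" unfolding BDd_def by (rule S.bd_sub)
  have F3: "(opap G w, w) \<in> D" if w: "w \<in> BG" for w
    using T.bd_inv[OF G_op D_op D_closed G0sub[unfolded G0_def]] w unfolding BG_def G0_def by blast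
  have F3': "(opap D z, z) \<in> G" if z: "z \<in> BDd" for z
    using S.bd_inv[OF D_op G_op G_closed D0sub[unfolded D0_def]] z unfolding BDd_def D0_def by blast
  have F4: "opap G w \<in> BDd" if w: "w \<in> BG" for w
  proof -
    have GwD: "opap G w \<in> Domain D" using F3[OF w] by blast
    have DGw: "opap D (opap G w) = w" using S.opap_eq[OF D_op F3[OF w]] .
    have "gip ip1 ip0 D (opap G w) p = 0" if p: "p \<in> Domain D0" for p
    proof -
      obtain r where pr: "(p, r) \<in> D0" using p by blast
      have Dp: "opap D p = r" using S.opap_eq[OF D_op] pr D0sub by blast
      have "(p, - r) \<in> adjoint_op ip0 ip1 G" using pr D0_def by (simp add: T.neg_iff)
      hence "ip1 (opap G w) p = ip0 w (- r)" using T.opap_in[OF G_op] w BGD unfolding T.adj_iff by blast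
      thus ?thesis unfolding gip_def DGw Dp using T.h0.ip_neg_r[of r w] by simp
    qed
    thus ?thesis unfolding BDd_def BD_def using GwD by blast
  qed
  have kG: "kappa_adj ip0 ip1 G G0 ipH \<kappa> \<psi> \<in> BG \<and>
    (\<forall>u\<in>BG. ipH (\<kappa> u) \<psi> = gip ip0 ip1 G u (kappa_adj ip0 ip1 G G0 ipH \<kappa> \<psi>))" for \<psi>
    unfolding BG_def
    by (rule T.kadj[OF G_op G_closed G0A HH]) (use \<kappa>_add \<kappa>_scale \<kappa>_bd in \<open>simp_all add: G0_def\<close>)
  have k0: "\<kappa> 0 = 0"
  proof -
    have "0 \<in> BG" unfolding BG_def by (rule T.bd_0[OF G_op G0A])
    hence "\<kappa> (0 + 0) = \<kappa> 0 + \<kappa> 0" using \<kappa>_add G0_def BG_def by blast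
    thus ?thesis by simp
  qed
  show ?thesis
  proof (rule set_eqI)
    fix x :: "'c \<times> 'c"
    obtain \<phi> \<psi> where x: "x = (\<phi>, \<psi>)" by (cases x)
    define w where "w = kappa_adj ip0 ip1 G G0 ipH \<kappa> \<psi>"
    have wB: "w \<in> BG" and wR: "\<forall>u\<in>BG. ipH (\<kappa> u) \<psi> = gip ip0 ip1 G u w"
      using kG[of \<psi>] w_def by auto
    have wD: "w \<in> Domain G" using wB BGD by blast
    have L: "x \<in> DtN_H ip0 ip1 G D m a ipH \<kappa> \<longleftrightarrow> (\<exists>u0\<in>BG. \<kappa> u0 = \<phi> \<and> (\<exists>u. u0 = piBD ip0 ip1 G G0 u
        \<and> opap G w = piBD ip1 ip0 D D0 (a (opap G u)) \<and> u \<in> Domain G \<and> a (opap G u) \<in> Domain D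
        \<and> m u - opap D (a (opap G u)) = 0))"
      unfolding x DtN_H_def DtN_def G0_def[symmetric] D0_def[symmetric] BG_def[symmetric] w_def by auto
    have R: "x \<in> {(\<phi>, \<psi>). \<exists>u\<in>Domain G.
        \<kappa> (piBD ip0 ip1 G (neg_op (adjoint_op ip1 ip0 D)) u) = \<phi> \<and>
        (\<forall>v\<in>Domain G. ip1 (a (opap G u)) (opap G v) + ip0 (m u) v
            = ipH \<psi> (\<kappa> (piBD ip0 ip1 G (neg_op (adjoint_op ip1 ip0 D)) v)))} \<longleftrightarrow>
       (\<exists>u\<in>Domain G. \<kappa> (piBD ip0 ip1 G G0 u) = \<phi> \<and>
        (\<forall>v\<in>Domain G. ip1 (a (opap G u)) (opap G v) + ip0 (m u) v = ipH \<psi> (\<kappa> (piBD ip0 ip1 G G0 v))))"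
      unfolding x G0_def by simp
    show "x \<in> DtN_H ip0 ip1 G D m a ipH \<kappa> \<longleftrightarrow> x \<in> {(\<phi>, \<psi>). \<exists>u\<in>Domain G.
        \<kappa> (piBD ip0 ip1 G (neg_op (adjoint_op ip1 ip0 D)) u) = \<phi> \<and>
        (\<forall>v\<in>Domain G. ip1 (a (opap G u)) (opap G v) + ip0 (m u) v
            = ipH \<psi> (\<kappa> (piBD ip0 ip1 G (neg_op (adjoint_op ip1 ip0 D)) v)))}"
      unfolding L R
    proof
      assume "\<exists>u0\<in>BG. \<kappa> u0 = \<phi> \<and> (\<exists>u. u0 = piBD ip0 ip1 G G0 u
        \<and> opap G w = piBD ip1 ip0 D D0 (a (opap G u)) \<and> u \<in> Domain G \<and> a (opap G u) \<in> Domain D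
        \<and> m u - opap D (a (opap G u)) = 0)"
      then obtain u where k: "\<kappa> (piBD ip0 ip1 G G0 u) = \<phi>"
        and qw: "opap G w = piBD ip1 ip0 D D0 (a (opap G u))" and uD: "u \<in> Domain G"
        and qD: "a (opap G u) \<in> Domain D" and mq: "m u - opap D (a (opap G u)) = 0" by blast
      define q where "q = a (opap G u)"
      have qD': "q \<in> Domain D" using qD q_def by simp
      have Dq: "opap D q = m u" using mq q_def by simp
      have main: "ip1 q (opap G v) + ip0 (opap D q) v = ipH \<psi> (\<kappa> (piBD ip0 ip1 G G0 v))"
        if v: "v \<in> Domain G" for v
      proof -
        define q' where "q' = piBD ip1 ip0 D D0 q"
        define r where "r = q - q'"
        define v' where "v' = piBD ip0 ip1 G G0 v"
        define v'' where "v'' = v - v'"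
        have q'B: "q' \<in> BDd" and rD0: "r \<in> Domain D0" using decD[OF qD'] q'_def r_def by auto
        have v'B: "v' \<in> BG" and v''G0: "v'' \<in> Domain G0" using decG[OF v] v'_def v''_def by auto
        have q'D: "q' \<in> Domain D" using q'B BDD by blast
        have rD: "r \<in> Domain D" using rD0 D0A by blast
        have v'D: "v' \<in> Domain G" using v'B BGD by blast
        have v''D: "v'' \<in> Domain G" using v''G0 G0A by blast
        have qq: "q = q' + r" unfolding r_def by simp
        have vv: "v = v' + v''" unfolding v''_def by simp
        have q'w: "q' = opap G w" using qw q'_def q_def by simp
        have Dq': "opap D q' = w" using S.opap_eq[OF D_op F3[OF wB]] q'w by simp
        have "ip1 q (opap G v) + ip0 (opap D q) v
            = (ip1 q' (opap G v) + ip0 (opap D q') v) + (ip1 r (opap G v) + ip0 (opap D r) v)"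
          unfolding qq S.opap_add[OF D_op q'D rD] using T.h1.ip_add T.h0.ip_add by simp
        also have "ip1 r (opap G v) + ip0 (opap D r) v = 0"
          using T.green1[OF G_op D_op D0sub[unfolded D0_def]] rD0 v D0_def by blast
        also have "ip1 q' (opap G v) + ip0 (opap D q') v
            = (ip1 q' (opap G v') + ip0 (opap D q') v') + (ip1 q' (opap G v'') + ip0 (opap D q') v'')"
          unfolding vv T.opap_add[OF G_op v'D v''D] using T.h1.ip_add_r T.h0.ip_add_r by simp
        also have "ip1 q' (opap G v'') + ip0 (opap D q') v'' = 0"
          using T.green2[OF G_op D_op G0sub[unfolded G0_def]] q'D v''G0 G0_def by blast
        also have "ip1 q' (opap G v') + ip0 (opap D q') v' = gip ip0 ip1 G w v'"
          unfolding gip_def q'w[symmetric] Dq' by simp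
        also have "\<dots> = cnj (gip ip0 ip1 G v' w)" using gG.ip_sym[OF v'D wD] .
        also have "\<dots> = cnj (ipH (\<kappa> v') \<psi>)" using wR v'B by simp
        also have "\<dots> = ipH \<psi> (\<kappa> v')" using hH.ip_sym[of "\<kappa> v'" \<psi>] by simp
        finally show ?thesis unfolding v'_def by simp
      qed
      show "\<exists>u\<in>Domain G. \<kappa> (piBD ip0 ip1 G G0 u) = \<phi> \<and>
        (\<forall>v\<in>Domain G. ip1 (a (opap G u)) (opap G v) + ip0 (m u) v = ipH \<psi> (\<kappa> (piBD ip0 ip1 G G0 v)))"
        using uD k main Dq q_def by auto
    next
      assume "\<exists>u\<in>Domain G. \<kappa> (piBD ip0 ip1 G G0 u) = \<phi> \<and>
        (\<forall>v\<in>Domain G. ip1 (a (opap G u)) (opap G v) + ip0 (m u) v = ipH \<psi> (\<kappa> (piBD ip0 ip1 G G0 v)))"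
      then obtain u where uD: "u \<in> Domain G" and k: "\<kappa> (piBD ip0 ip1 G G0 u) = \<phi>"
        and hyp: "\<And>v. v \<in> Domain G \<Longrightarrow> ip1 (a (opap G u)) (opap G v) + ip0 (m u) v
            = ipH \<psi> (\<kappa> (piBD ip0 ip1 G G0 v))" by blast
      define q where "q = a (opap G u)"
      have pi0: "piBD ip0 ip1 G G0 z = 0" if z: "z \<in> Domain G0" for z
      proof -
        have zD: "z \<in> Domain G" using z G0A by blast
        show ?thesis unfolding BG_def
        proof (rule T.piBD_eq[OF G_op G0A zD])
          show "0 \<in> BD ip0 ip1 G G0" by (rule T.bd_0[OF G_op G0A])
          show "\<forall>b\<in>BD ip0 ip1 G G0. gip ip0 ip1 G (z - 0) b = 0"
          proof
            fix b assume b: "b \<in> BD ip0 ip1 G G0"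
            hence bD: "b \<in> Domain G" using T.bd_sub by blast
            have "gip ip0 ip1 G z b = cnj (gip ip0 ip1 G b z)" using gG.ip_sym[OF bD zD] .
            thus "gip ip0 ip1 G (z - 0) b = 0" using T.bd_orth[OF b z] by simp
          qed
        qed
      qed
      have qm: "(q, m u) \<in> D"
      proof (rule S.adj_adj[OF D_op D_closed])
        show "(q, m u) \<in> adjoint_op ip0 ip1 (adjoint_op ip1 ip0 D)"
          unfolding T.adj_iff
        proof (intro allI impI)
          fix z t assume zt: "(z, t) \<in> adjoint_op ip1 ip0 D"
          hence zt': "(z, - t) \<in> G0" unfolding G0_def by (simp add: T.neg_iff)
          hence zG0: "z \<in> Domain G0" by blast
          have zD: "z \<in> Domain G" using zG0 G0A by blast
          have Gz: "opap G z = - t" using T.opap_eq[OF G_op] zt' G0sub by blast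
          have "ip1 q (- t) + ip0 (m u) z = 0"
            using hyp[OF zD] Gz pi0[OF zG0] k0 hH.ip_zero_r q_def by simp
          hence "ip0 (m u) z = ip1 q t" using T.h1.ip_neg_r[of t q] by (simp add: add_eq_0_iff2)
          hence "cnj (ip0 (m u) z) = cnj (ip1 q t)" by simp
          thus "ip1 t q = ip0 z (m u)" using T.h0.ip_sym[of "m u" z] T.h1.ip_sym[of q t] by simp
        qed
      qed
      hence qD: "q \<in> Domain D" and Dq: "opap D q = m u" using S.opap_eq[OF D_op] by auto
      have GwB: "opap G w \<in> BDd" by (rule F4[OF wB])
      have orth: "\<forall>z\<in>BDd. gip ip1 ip0 D (q - opap G w) z = 0"
      proof
        fix z assume z: "z \<in> BDd"
        have zD: "z \<in> Domain D" using z BDD by blast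
        define y where "y = opap D z"
        have yz: "(y, z) \<in> G" using F3'[OF z] y_def by simp
        have yD: "y \<in> Domain G" using yz by blast
        have Gy: "opap G y = z" using T.opap_eq[OF G_op yz] .
        have GwD: "opap G w \<in> Domain D" using GwB BDD by blast
        have DGw: "opap D (opap G w) = w" using S.opap_eq[OF D_op F3[OF wB]] .
        have e1: "gip ip1 ip0 D q z = ipH \<psi> (\<kappa> (piBD ip0 ip1 G G0 y))"
          unfolding gip_def Dq y_def[symmetric] using hyp[OF yD] Gy q_def by simp
        define y' where "y' = piBD ip0 ip1 G G0 y"
        have y'B: "y' \<in> BG" and yo: "gip ip0 ip1 G (y - y') w = 0"
          using decG[OF yD] y'_def wB by auto
        have y'D: "y' \<in> Domain G" using y'B BGD by blast
        have "gip ip0 ip1 G y w = gip ip0 ip1 G y' w + gip ip0 ip1 G (y - y') w"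
          using gG.ip_diff_l[OF yD y'D wD] by simp
        also have "\<dots> = ipH (\<kappa> y') \<psi>" using yo wR y'B by simp
        finally have gyw: "gip ip0 ip1 G y w = ipH (\<kappa> y') \<psi>" .
        have "gip ip1 ip0 D (opap G w) z = ip1 (opap G w) (opap G y) + ip0 w y"
          unfolding gip_def DGw y_def[symmetric] Gy ..
        also have "\<dots> = gip ip0 ip1 G w y" unfolding gip_def by simp
        also have "\<dots> = cnj (gip ip0 ip1 G y w)" using gG.ip_sym[OF yD wD] .
        also have "\<dots> = ipH \<psi> (\<kappa> y')" unfolding gyw using hH.ip_sym[of "\<kappa> y'" \<psi>] by simp
        finally have e2: "gip ip1 ip0 D (opap G w) z = ipH \<psi> (\<kappa> y')" .
        have "gip ip1 ip0 D (q - opap G w) z = gip ip1 ip0 D q z - gip ip1 ip0 D (opap G w) z"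
          using gD.ip_diff_l[OF qD GwD zD] .
        thus "gip ip1 ip0 D (q - opap G w) z = 0" using e1 e2 y'_def by simp
      qed
      have piq: "piBD ip1 ip0 D D0 q = opap G w"
        using S.piBD_eq[OF D_op D0A qD] GwB orth unfolding BDd_def by blast
      have "piBD ip0 ip1 G G0 u \<in> BG" using decG[OF uD] by blast
      thus "\<exists>u0\<in>BG. \<kappa> u0 = \<phi> \<and> (\<exists>u. u0 = piBD ip0 ip1 G G0 u
        \<and> opap G w = piBD ip1 ip0 D D0 (a (opap G u)) \<and> u \<in> Domain G \<and> a (opap G u) \<in> Domain D
        \<and> m u - opap D (a (opap G u)) = 0)"
      proof (intro bexI[OF _ \<open>piBD ip0 ip1 G G0 u \<in> BG\<close>] conjI exI[of _ u])
        show "\<kappa> (piBD ip0 ip1 G G0 u) = \<phi>" by (rule k)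
        show "opap G w = piBD ip1 ip0 D D0 (a (opap G u))" using piq q_def by simp
        show "a (opap G u) \<in> Domain D" using qD q_def by simp
        show "m u - opap D (a (opap G u)) = 0" using Dq q_def by simp
      qed (use uD in simp_all)
    qed
  qed
qed

end
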